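(* Let $\mathcal R=(\Delta^*,\Theta)$ be a word rewriting system with $\Delta=\{0,1\}$, let $\Sigma_{\mathcal R}=\Sigma_\Theta\cup\Sigma_{LR}$ be the set of tgds over schema $\{E,L,R\}$ defined below, and let $w_0\in\Delta^*$. Then the core chase sequence with $\Sigma_{\mathcal R}$ starting from $I_{w_0}$ is infinite if and only if there is an infinite derivation $w_0\rightarrow_{\mathcal R}w_1\rightarrow_{\mathcal R}w_2\rightarrow_{\mathcal R}\cdots$.
   Context: Word rewriting: $\Theta$ is a finite subset of $\Delta^*\times\Delta^*$; $u\rightarrow_{\mathcal R}v$ iff $u=x\ell y$, $v=xry$ for some $(\ell,r)\in\Theta$ and $x,y\in\Delta^*$. For $w=a_1\dots a_n\in\Delta^*$, $I_w=\{E(x_0,a_1,x_1),\dots,E(x_{n-1},a_n,x_n)\}$ with pairwise distinct nulls $x_i$. Schema: $E$ ternary, $L,R$ binary; $0,1$ are constants. $\Sigma_\Theta$ contains, for each $\rho=(a_1\dots a_n,b_1\dots b_m)\in\Theta$, the tgd $E(x_0,a_1,x_1),\dots,E(x_{n-1},a_n,x_n)\rightarrow\exists y_0\dots y_m\,L(x_0,y_0),E(y_0,b_1,y_1),\dots,E(y_{m-1},b_m,y_m),R(x_n,y_m)$. $\Sigma_{LR}$ consists of, for $c\in\{0,1\}$: $E(x_0,c,x_1),L(x_1,y_1)\rightarrow\exists y_0\,L(x_0,y_0),E(y_0,c,y_1)$ and $R(x_0,z_0),E(x_0,c,x_1)\rightarrow\exists z_1\,E(z_0,c,z_1),R(x_1,z_1)$.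 Chase: a trigger for tgd $\alpha\rightarrow\exists\bar z\beta$ on instance $I$ is a mapping $h$ (identity on constants) with $h(\alpha)\subseteq I$, active if no extension $h'$ has $h'(\beta)\subseteq I$. The core chase from $I$ repeatedly fires all active triggers in parallel (each adding $h'(\beta)$ with fresh nulls for existential variables), takes the union and replaces it by its core (minimal subinstance to which the instance maps by an endomorphism); it stops when no active trigger remains. *)

theory Defs
  imports Main
begin

datatype 't atom = E 't 't 't | L 't 't | R 't 't

text \<open>Instance terms: the constants 0 and 1 (C False, C True) and labelled nulls.\<close>
datatype "term" = C bool | N nat

datatype vterm = VC bool | V nat

type_synonym inst_db = "term atom set"
type_synonym tgd = "vterm atom list \<times> vterm atom list"  

fun app :: "(nat \<Rightarrow> term) \<Rightarrow> vterm \<Rightarrow> term" where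
  "app h (VC c) = C c"
| "app h (V x) = h x"

definition inst :: "(nat \<Rightarrow> term) \<Rightarrow> vterm atom \<Rightarrow> term atom" where
  "inst h a = map_atom (app h) a"

definition vars_of :: "vterm atom list \<Rightarrow> nat set" where
  "vars_of as = {x. V x \<in> (\<Union>a\<in>set as. set_atom a)}"

definition bvars :: "tgd \<Rightarrow> nat set" where
  "bvars \<sigma> = vars_of (fst \<sigma>)"

definition evars :: "tgd \<Rightarrow> nat set" where
  "evars \<sigma> = vars_of (snd \<sigma>) - bvars \<sigma>"

definition adom :: "inst_db \<Rightarrow> term set" where
  "adom I = (\<Union>a\<in>I. set_atom a)"

text \<open>A trigger is a tgd together with a body match; the match is canonicalised to be
  constant outside the body variables so that triggers correspond to body matches.\<close>
definition trigger :: "tgd set \<Rightarrow> inst_db \<Rightarrow> tgd \<times> (nat \<Rightarrow> term) \<Rightarrow> bool" where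
  "trigger S I t \<longleftrightarrow> fst t \<in> S \<and> (\<forall>x. x \<notin> bvars (fst t) \<longrightarrow> snd t x = C False)
      \<and> inst (snd t) ` set (fst (fst t)) \<subseteq> I"

definition active :: "tgd set \<Rightarrow> inst_db \<Rightarrow> tgd \<times> (nat \<Rightarrow> term) \<Rightarrow> bool" where
  "active S I t \<longleftrightarrow> trigger S I t \<and>
     \<not> (\<exists>h'. (\<forall>x\<in>bvars (fst t). h' x = snd t x) \<and> inst h' ` set (snd (fst t)) \<subseteq> I)"

definition hom :: "(term \<Rightarrow> term) \<Rightarrow> inst_db \<Rightarrow> inst_db \<Rightarrow> bool" where
  "hom h A B \<longleftrightarrow> (\<forall>c. h (C c) = C c) \<and> map_atom h ` A \<subseteq> B"

definition is_core_of :: "inst_db \<Rightarrow> inst_db \<Rightarrow> bool" where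
  "is_core_of K J \<longleftrightarrow> J \<subseteq> K \<and> (\<exists>h. hom h K J) \<and> (\<forall>J'. J' \<subset> J \<longrightarrow> \<not> (\<exists>h. hom h K J'))"

definition core_step :: "tgd set \<Rightarrow> inst_db \<Rightarrow> inst_db \<Rightarrow> bool" where
  "core_step S I J \<longleftrightarrow> (let T = {t. active S I t} in T \<noteq> {} \<and>
     (\<exists>f :: tgd \<times> (nat \<Rightarrow> term) \<Rightarrow> nat \<Rightarrow> term.
        (\<forall>t\<in>T. (\<forall>x\<in>bvars (fst t). f t x = snd t x)
               \<and> (\<forall>x\<in>evars (fst t). (\<exists>k. f t x = N k) \<and> f t x \<notin> adom I)
               \<and> inj_on (f t) (evars (fst t)))
      \<and> (\<forall>t\<in>T. \<forall>t'\<in>T. t \<noteq> t' \<longrightarrow> f t ` evars (fst t) \<inter> f t' ` evars (fst t') = {})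
      \<and> is_core_of (I \<union> (\<Union>t\<in>T. inst (f t) ` set (snd (fst t)))) J))"

text \<open>The core chase sequence from I0 is infinite: it never reaches an inst_db without
  active triggers (all choices of fresh nulls and cores yield isomorphic instances).\<close>
definition core_chase_infinite :: "tgd set \<Rightarrow> inst_db \<Rightarrow> bool" where
  "core_chase_infinite S I0 \<longleftrightarrow> (\<exists>seq. seq 0 = I0 \<and> (\<forall>i. core_step S (seq i) (seq (Suc i))))"

definition rewrite :: "(bool list \<times> bool list) set \<Rightarrow> bool list \<Rightarrow> bool list \<Rightarrow> bool" where
  "rewrite \<Theta> u v \<longleftrightarrow> (\<exists>x y l r. (l, r) \<in> \<Theta> \<and> u = x @ l @ y \<and> v = x @ r @ y)"

definition word_instance :: "bool list \<Rightarrow> inst_db" where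
  "word_instance w = {E (N i) (C (w ! i)) (N (Suc i)) | i. i < length w}"

text \<open>tgd for a rule (a_1..a_n, b_1..b_m): x_i = V i (i \<le> n), y_j = V (n+1+j) (j \<le> m).\<close>
definition rule_tgd :: "bool list \<times> bool list \<Rightarrow> tgd" where
  "rule_tgd \<rho> = (let l = fst \<rho>; r = snd \<rho>; n = length l; m = length r in
     ([E (V i) (VC (l ! i)) (V (Suc i)). i \<leftarrow> [0..<n]],
      [L (V 0) (V (n + 1))]
      @ [E (V (n + 1 + j)) (VC (r ! j)) (V (n + 2 + j)). j \<leftarrow> [0..<m]]
      @ [R (V n) (V (n + 1 + m))]))"

definition Sigma_Theta :: "(bool list \<times> bool list) set \<Rightarrow> tgd set" where
  "Sigma_Theta \<Theta> = rule_tgd ` \<Theta>"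

definition Sigma_LR :: "tgd set" where
  "Sigma_LR = (\<Union>c\<in>{False, True}.
     { ([E (V 0) (VC c) (V 1), L (V 1) (V 2)], [L (V 0) (V 3), E (V 3) (VC c) (V 2)]),
       ([R (V 0) (V 1), E (V 0) (VC c) (V 2)], [E (V 1) (VC c) (V 3), R (V 2) (V 3)]) })"

definition Sigma_R :: "(bool list \<times> bool list) set \<Rightarrow> tgd set" where
  "Sigma_R \<Theta> = Sigma_Theta \<Theta> \<union> Sigma_LR"

end

theory Submission
  imports Defs "HOL-Library.Countable" "HOL-Library.FuncSet"
begin
lemma app_comp: "(\<forall>c. g (C c) = C c) \<Longrightarrow> app (g \<circ> h) v = g (app h v)"
  by (cases v) auto

lemma inst_comp: "(\<forall>c. g (C c) = C c) \<Longrightarrow> inst (g \<circ> h) a = map_atom g (inst h a)"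
  unfolding inst_def by (simp add: atom.map_comp comp_def app_comp[unfolded comp_def] cong: atom.map_cong)

lemma inst_cong: "(\<And>x. V x \<in> set_atom a \<Longrightarrow> h1 x = h2 x) \<Longrightarrow> inst h1 a = inst h2 a"
  unfolding inst_def
proof (rule atom.map_cong0)
  fix z assume z: "z \<in> set_atom a" and h: "\<And>x. V x \<in> set_atom a \<Longrightarrow> h1 x = h2 x"
  show "app h1 z = app h2 z"
  proof (cases z)
    case (V x) with z h show ?thesis by simp
  qed simp
qed

lemma set_inst: "set_atom (inst h a) = app h ` set_atom a"
  unfolding inst_def by (simp add: atom.set_map)

lemma var_in_inst: "V x \<in> set_atom a \<Longrightarrow> h x \<in> set_atom (inst h a)"
  by (force simp: set_inst)

lemma finite_set_atom: "finite (set_atom a)"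
  by (cases a) auto

lemma finite_adom: "finite I \<Longrightarrow> finite (adom I)"
  unfolding adom_def by (auto simp: finite_set_atom)

lemma finite_vars_of: "finite (vars_of as)"
proof -
  have "vars_of as = V -` (\<Union>a\<in>set as. set_atom a)" unfolding vars_of_def by auto
  moreover have "finite (\<Union>a\<in>set as. set_atom a)" by (auto simp: finite_set_atom)
  ultimately show ?thesis by (simp add: finite_vimageI inj_def)
qed

lemma bvar_adom:
  assumes "x \<in> bvars \<sigma>" "inst h ` set (fst \<sigma>) \<subseteq> I"
  shows "h x \<in> adom I"
proof -
  from assms(1) obtain a where a: "a \<in> set (fst \<sigma>)" "V x \<in> set_atom a"
    unfolding bvars_def vars_of_def by auto
  from a(2) have "h x \<in> set_atom (inst h a)" by (rule var_in_inst)
  with a assms(2) show ?thesis unfolding adom_def by auto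
qed

lemma inst_cong_body:
  assumes "a \<in> set (fst \<sigma>)" "\<And>x. x \<in> bvars \<sigma> \<Longrightarrow> h1 x = h2 x"
  shows "inst h1 a = inst h2 a"
  using assms by (intro inst_cong) (auto simp: bvars_def vars_of_def)

lemma head_vars:
  assumes "a \<in> set (snd \<sigma>)" "V x \<in> set_atom a"
  shows "x \<in> bvars \<sigma> \<or> x \<in> evars \<sigma>"
  using assms by (auto simp: evars_def vars_of_def)

definition model :: "tgd set \<Rightarrow> inst_db \<Rightarrow> bool" where
  "model S I \<longleftrightarrow> (\<forall>\<sigma>\<in>S. \<forall>h. inst h ` set (fst \<sigma>) \<subseteq> I \<longrightarrow>
      (\<exists>h'. (\<forall>x\<in>bvars \<sigma>. h' x = h x) \<and> inst h' ` set (snd \<sigma>) \<subseteq> I))"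

lemma model_no_active: "model S I \<Longrightarrow> \<not> active S I t"
  unfolding model_def active_def trigger_def by (metis prod.collapse)

lemma no_active_model:
  assumes "\<forall>t. \<not> active S I t" shows "model S I"
  unfolding model_def
proof (intro ballI allI impI)
  fix \<sigma> h assume s: "\<sigma> \<in> S" and b: "inst h ` set (fst \<sigma>) \<subseteq> I"
  define hc where "hc x = (if x \<in> bvars \<sigma> then h x else C False)" for x
  have eq: "inst hc a = inst h a" if "a \<in> set (fst \<sigma>)" for a
    using that by (intro inst_cong_body) (auto simp: hc_def)
  have "trigger S I (\<sigma>, hc)" unfolding trigger_def using s b eq by (auto simp: hc_def)
  with assms have "\<exists>h'. (\<forall>x\<in>bvars \<sigma>. h' x = hc x) \<and> inst h' ` set (snd \<sigma>) \<subseteq> I"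
    unfolding active_def by (metis fst_conv snd_conv)
  then show "\<exists>h'. (\<forall>x\<in>bvars \<sigma>. h' x = h x) \<and> inst h' ` set (snd \<sigma>) \<subseteq> I"
    by (auto simp: hc_def)
qed

lemma core_step_active: "core_step S I J \<Longrightarrow> \<exists>t. active S I t"
proof -
  assume "core_step S I J"
  then have "{t. active S I t} \<noteq> {}" unfolding core_step_def Let_def by (rule conjunct1)
  then show ?thesis by auto
qed

lemma model_no_step: "model S I \<Longrightarrow> \<not> core_step S I J"
  using model_no_active core_step_active by blast

lemma core_step_K:
  assumes "core_step S I J"
  shows "\<exists>K. is_core_of K J \<and> I \<subseteq> K \<and> (\<forall>\<sigma>\<in>S. \<forall>h. inst h ` set (fst \<sigma>) \<subseteq> I \<longrightarrow>
      (\<exists>h2. (\<forall>x\<in>bvars \<sigma>. h2 x = h x) \<and> inst h2 ` set (snd \<sigma>) \<subseteq> K))"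
proof -
  define T where "T = {t. active S I t}"
  have "T \<noteq> {} \<and> (\<exists>f :: tgd \<times> (nat \<Rightarrow> term) \<Rightarrow> nat \<Rightarrow> term.
        (\<forall>t\<in>T. (\<forall>x\<in>bvars (fst t). f t x = snd t x)
               \<and> (\<forall>x\<in>evars (fst t). (\<exists>k. f t x = N k) \<and> f t x \<notin> adom I)
               \<and> inj_on (f t) (evars (fst t)))
      \<and> (\<forall>t\<in>T. \<forall>t'\<in>T. t \<noteq> t' \<longrightarrow> f t ` evars (fst t) \<inter> f t' ` evars (fst t') = {})
      \<and> is_core_of (I \<union> (\<Union>t\<in>T. inst (f t) ` set (snd (fst t)))) J)"
    using assms unfolding core_step_def Let_def T_def by assumption
  then obtain f where f1: "\<forall>t\<in>T. (\<forall>x\<in>bvars (fst t). f t x = snd t x)"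
    and core: "is_core_of (I \<union> (\<Union>t\<in>T. inst (f t) ` set (snd (fst t)))) J"
    by (metis (no_types, lifting))
  define K where "K = I \<union> (\<Union>t\<in>T. inst (f t) ` set (snd (fst t)))"
  have "\<exists>h2. (\<forall>x\<in>bvars \<sigma>. h2 x = h x) \<and> inst h2 ` set (snd \<sigma>) \<subseteq> K"
    if s: "\<sigma> \<in> S" and b: "inst h ` set (fst \<sigma>) \<subseteq> I" for \<sigma> h
  proof -
    define hc where "hc x = (if x \<in> bvars \<sigma> then h x else C False)" for x
    have eq: "inst hc a = inst h a" if "a \<in> set (fst \<sigma>)" for a
      using that by (intro inst_cong_body) (auto simp: hc_def)
    have tr: "trigger S I (\<sigma>, hc)" unfolding trigger_def using s b eq by (auto simp: hc_def)
    show ?thesis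
    proof (cases "active S I (\<sigma>, hc)")
      case True
      then have "(\<sigma>, hc) \<in> T" by (simp add: T_def)
      then show ?thesis using f1 unfolding K_def
        by (intro exI[of _ "f (\<sigma>, hc)"]) (auto simp: hc_def)
    next
      case False
      with tr obtain h' where "\<forall>x\<in>bvars \<sigma>. h' x = hc x" "inst h' ` set (snd \<sigma>) \<subseteq> I"
        unfolding active_def by auto
      then show ?thesis unfolding K_def by (intro exI[of _ h']) (auto simp: hc_def)
    qed
  qed
  then show ?thesis using core unfolding K_def by blast
qed

lemma hom_comp: "hom g A B \<Longrightarrow> B \<subseteq> K \<Longrightarrow> hom c K J \<Longrightarrow> hom (c \<circ> g) A J"
  unfolding hom_def
proof (intro conjI allI subsetI)
  fix a assume H: "(\<forall>c. g (C c) = C c) \<and> map_atom g ` A \<subseteq> B" "B \<subseteq> K"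
    "(\<forall>ca. c (C ca) = C ca) \<and> map_atom c ` K \<subseteq> J" and a: "a \<in> map_atom (c \<circ> g) ` A"
  then obtain x where x: "x \<in> A" "a = map_atom (c \<circ> g) x" by auto
  then have "map_atom g x \<in> K" using H by auto
  then have "map_atom c (map_atom g x) \<in> J" using H by auto
  then show "a \<in> J" using x by (simp add: atom.map_comp)
qed auto

lemma finite_Hs:
  assumes "finite A"
  shows "finite {h. (\<forall>x. x \<notin> B \<longrightarrow> h x = C False) \<and> (\<forall>x\<in>B. h x \<in> A) \<and> finite B}"
proof (cases "finite B")
  case True
  let ?H = "{h. (\<forall>x. x \<notin> B \<longrightarrow> h x = C False) \<and> (\<forall>x\<in>B. h x \<in> A) \<and> finite B}"
  have inj: "inj_on (\<lambda>h. restrict h B) ?H"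
  proof (rule inj_onI)
    fix h1 h2 assume "h1 \<in> ?H" "h2 \<in> ?H" "restrict h1 B = restrict h2 B"
    then have eqr: "restrict h1 B = restrict h2 B" by simp
    have "\<forall>x\<in>B. h1 x = h2 x"
    proof
      fix x assume x: "x \<in> B"
      from eqr have "restrict h1 B x = restrict h2 B x" by simp
      then show "h1 x = h2 x" using x by simp
    qed
    then show "h1 = h2" using \<open>h1 \<in> ?H\<close> \<open>h2 \<in> ?H\<close> by (auto simp: fun_eq_iff)
  qed
  have "(\<lambda>h. restrict h B) ` ?H \<subseteq> (\<Pi>\<^sub>E x\<in>B. A)" by auto
  moreover have "finite (\<Pi>\<^sub>E x\<in>B. A)" using True assms by (intro finite_PiE) auto
  ultimately have "finite ((\<lambda>h. restrict h B) ` ?H)" by (rule finite_subset)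
  then show ?thesis using inj by (rule finite_imageD)
next
  case False then show ?thesis by simp
qed

lemma finite_triggers:
  assumes S: "finite S" and I: "finite I"
  shows "finite {t. trigger S I t}"
proof -
  define Hs where "Hs \<sigma> = {h. (\<forall>x. x \<notin> bvars \<sigma> \<longrightarrow> h x = C False) \<and> (\<forall>x\<in>bvars \<sigma>. h x \<in> adom I) \<and> finite (bvars \<sigma>)}" for \<sigma>
  have "{t. trigger S I t} \<subseteq> (\<Union>\<sigma>\<in>S. Pair \<sigma> ` Hs \<sigma>)"
  proof
    fix t assume "t \<in> {t. trigger S I t}"
    then have tr: "trigger S I t" by simp
    obtain \<sigma> h where t: "t = (\<sigma>, h)" by (cases t)
    have b: "inst h ` set (fst \<sigma>) \<subseteq> I" and c: "\<forall>x. x \<notin> bvars \<sigma> \<longrightarrow> h x = C False"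
      using tr unfolding t trigger_def by auto
    have "h \<in> Hs \<sigma>" unfolding Hs_def using b c bvar_adom[OF _ b]
      by (simp add: bvars_def finite_vars_of)
    then show "t \<in> (\<Union>\<sigma>\<in>S. Pair \<sigma> ` Hs \<sigma>)" using tr unfolding t trigger_def by auto
  qed
  moreover have fin: "finite (Hs \<sigma>)" for \<sigma> unfolding Hs_def using finite_adom[OF I] by (rule finite_Hs)
  have "finite (\<Union>\<sigma>\<in>S. Pair \<sigma> ` Hs \<sigma>)"
    using S fin by (intro finite_UN_I) auto
  ultimately show ?thesis by (rule finite_subset)
qed

lemma hom_id: "hom id K K"
  unfolding hom_def by (simp add: atom.map_id)

lemma core_exists:
  assumes "finite K" shows "\<exists>J. is_core_of K J"
proof -
  let ?P = "\<lambda>J. J \<subseteq> K \<and> (\<exists>h. hom h K J)"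
  have "?P K" using hom_id by blast
  then obtain J where J: "?P J" and min: "\<forall>J'. ?P J' \<longrightarrow> card J \<le> card J'"
    using ex_has_least_nat[of ?P K card] by blast
  have "\<not> (\<exists>h. hom h K J')" if "J' \<subset> J" for J'
  proof
    assume "\<exists>h. hom h K J'"
    then have "?P J'" using that J by auto
    then have "card J \<le> card J'" using min by blast
    moreover have "finite J" using J assms by (blast intro: finite_subset)
    then have "card J' < card J" using that by (rule psubset_card_mono)
    ultimately show False by simp
  qed
  then show ?thesis using J unfolding is_core_of_def by blast
qed

lemma core_step_unfold:
  assumes "core_step S I J"
  obtains f where
    "\<forall>t\<in>{t. active S I t}. (\<forall>x\<in>bvars (fst t). f t x = snd t x)
               \<and> (\<forall>x\<in>evars (fst t). (\<exists>k. f t x = N k) \<and> f t x \<notin> adom I)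
               \<and> inj_on (f t) (evars (fst t))"
    "\<forall>t\<in>{t. active S I t}. \<forall>t'\<in>{t. active S I t}. t \<noteq> t' \<longrightarrow> f t ` evars (fst t) \<inter> f t' ` evars (fst t') = {}"
    "is_core_of (I \<union> (\<Union>t\<in>{t. active S I t}. inst (f t) ` set (snd (fst t)))) J"
proof -
  have "{t. active S I t} \<noteq> {} \<and> (\<exists>f :: tgd \<times> (nat \<Rightarrow> term) \<Rightarrow> nat \<Rightarrow> term.
        (\<forall>t\<in>{t. active S I t}. (\<forall>x\<in>bvars (fst t). f t x = snd t x)
               \<and> (\<forall>x\<in>evars (fst t). (\<exists>k. f t x = N k) \<and> f t x \<notin> adom I)
               \<and> inj_on (f t) (evars (fst t)))
      \<and> (\<forall>t\<in>{t. active S I t}. \<forall>t'\<in>{t. active S I t}. t \<noteq> t' \<longrightarrow> f t ` evars (fst t) \<inter> f t' ` evars (fst t') = {})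
      \<and> is_core_of (I \<union> (\<Union>t\<in>{t. active S I t}. inst (f t) ` set (snd (fst t)))) J)"
    using assms unfolding core_step_def Let_def by assumption
  then have "\<exists>f :: tgd \<times> (nat \<Rightarrow> term) \<Rightarrow> nat \<Rightarrow> term.
        (\<forall>t\<in>{t. active S I t}. (\<forall>x\<in>bvars (fst t). f t x = snd t x)
               \<and> (\<forall>x\<in>evars (fst t). (\<exists>k. f t x = N k) \<and> f t x \<notin> adom I)
               \<and> inj_on (f t) (evars (fst t)))
      \<and> (\<forall>t\<in>{t. active S I t}. \<forall>t'\<in>{t. active S I t}. t \<noteq> t' \<longrightarrow> f t ` evars (fst t) \<inter> f t' ` evars (fst t') = {})
      \<and> is_core_of (I \<union> (\<Union>t\<in>{t. active S I t}. inst (f t) ` set (snd (fst t)))) J" by (rule conjunct2)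
  then obtain f where f: "(\<forall>t\<in>{t. active S I t}. (\<forall>x\<in>bvars (fst t). f t x = snd t x)
               \<and> (\<forall>x\<in>evars (fst t). (\<exists>k. f t x = N k) \<and> f t x \<notin> adom I)
               \<and> inj_on (f t) (evars (fst t)))
      \<and> (\<forall>t\<in>{t. active S I t}. \<forall>t'\<in>{t. active S I t}. t \<noteq> t' \<longrightarrow> f t ` evars (fst t) \<inter> f t' ` evars (fst t') = {})
      \<and> is_core_of (I \<union> (\<Union>t\<in>{t. active S I t}. inst (f t) ` set (snd (fst t)))) J" by (rule exE)
  show ?thesis by (rule that[OF conjunct1[OF f] conjunct1[OF conjunct2[OF f]] conjunct2[OF conjunct2[OF f]]])
qed

lemma core_step_core:
  assumes st: "core_step S I J"
  obtains f where "is_core_of (I \<union> (\<Union>t\<in>{t. active S I t}. inst (f t) ` set (snd (fst t)))) J"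
proof -
  obtain f where "\<forall>t\<in>{t. active S I t}. (\<forall>x\<in>bvars (fst t). f t x = snd t x)
               \<and> (\<forall>x\<in>evars (fst t). (\<exists>k. f t x = N k) \<and> f t x \<notin> adom I)
               \<and> inj_on (f t) (evars (fst t))"
    "\<forall>t\<in>{t. active S I t}. \<forall>t'\<in>{t. active S I t}. t \<noteq> t' \<longrightarrow> f t ` evars (fst t) \<inter> f t' ` evars (fst t') = {}"
    and c: "is_core_of (I \<union> (\<Union>t\<in>{t. active S I t}. inst (f t) ` set (snd (fst t)))) J"
    by (rule core_step_unfold[OF st])
  show ?thesis by (rule that[OF c])
qed

lemma finite_active:
  assumes S: "finite S" and I: "finite I"
  shows "finite {t. active S I t}"
proof -
  have "{t. active S I t} \<subseteq> {t. trigger S I t}" by (auto simp: active_def)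
  then show ?thesis using finite_triggers[OF S I] by (rule finite_subset)
qed

lemma finite_core_step:
  assumes S: "finite S" and I: "finite I" and st: "core_step S I J"
  shows "finite J"
proof -
  obtain f where c: "is_core_of (I \<union> (\<Union>t\<in>{t. active S I t}. inst (f t) ` set (snd (fst t)))) J"
    by (rule core_step_core[OF st])
  have "finite (\<Union>t\<in>{t. active S I t}. inst (f t) ` set (snd (fst t)))"
    by (rule finite_UN_I[OF finite_active[OF S I]]) simp
  then have "finite (I \<union> (\<Union>t\<in>{t. active S I t}. inst (f t) ` set (snd (fst t))))"
    using I by simp
  moreover have "J \<subseteq> I \<union> (\<Union>t\<in>{t. active S I t}. inst (f t) ` set (snd (fst t)))"
    using c unfolding is_core_of_def by (rule conjunct1)
  ultimately show ?thesis by (rule finite_subset[rotated])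
qed

lemma core_step_exists:
  assumes S: "finite S" and I: "finite I" and ex: "\<exists>t. active S I t"
  shows "\<exists>J. core_step S I J"
proof -
  define T where "T = {t. active S I t}"
  have fT: "finite T"
    unfolding T_def using finite_triggers[OF S I] by (rule finite_subset[rotated]) (auto simp: active_def)
  obtain e :: "tgd \<times> (nat \<Rightarrow> term) \<Rightarrow> nat" and n :: nat where e: "inj_on e T"
    using finite_imp_inj_to_nat_seg[OF fT] by blast
  obtain M where M: "\<forall>k. N k \<in> adom I \<longrightarrow> k < M"
  proof -
    have "{k. N k \<in> adom I} = N -` adom I" by auto
    moreover have "finite (N -` adom I)" using finite_adom[OF I] by (rule finite_vimageI) (simp add: inj_def)
    ultimately have "finite {k. N k \<in> adom I}" by simp
    then obtain M where "\<forall>k\<in>{k. N k \<in> adom I}. k < M"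
      using finite_nat_set_iff_bounded by blast
    then show ?thesis using that by blast
  qed
  define f where "f t x = (if x \<in> bvars (fst t) then snd t x else N (M + prod_encode (e t, x)))" for t x
  have P1: "\<forall>t\<in>T. (\<forall>x\<in>bvars (fst t). f t x = snd t x)
               \<and> (\<forall>x\<in>evars (fst t). (\<exists>k. f t x = N k) \<and> f t x \<notin> adom I)
               \<and> inj_on (f t) (evars (fst t))"
  proof
    fix t assume "t \<in> T"
    have "f t x \<notin> adom I" if "x \<in> evars (fst t)" for x
      using that M unfolding f_def evars_def by auto
    moreover have "inj_on (f t) (evars (fst t))"
      by (rule inj_onI) (auto simp: f_def evars_def)
    ultimately show "(\<forall>x\<in>bvars (fst t). f t x = snd t x)
               \<and> (\<forall>x\<in>evars (fst t). (\<exists>k. f t x = N k) \<and> f t x \<notin> adom I)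
               \<and> inj_on (f t) (evars (fst t))"
      by (auto simp: f_def evars_def)
  qed
  have P2: "\<forall>t\<in>T. \<forall>t'\<in>T. t \<noteq> t' \<longrightarrow> f t ` evars (fst t) \<inter> f t' ` evars (fst t') = {}"
  proof (intro ballI impI)
    fix t t' assume "t \<in> T" "t' \<in> T" "t \<noteq> t'"
    then have ne: "e t \<noteq> e t'" using e by (meson inj_on_def)
    show "f t ` evars (fst t) \<inter> f t' ` evars (fst t') = {}"
      using ne by (auto simp: f_def evars_def)
  qed
  have "finite (I \<union> (\<Union>t\<in>T. inst (f t) ` set (snd (fst t))))" using I fT by auto
  then obtain J where J: "is_core_of (I \<union> (\<Union>t\<in>T. inst (f t) ` set (snd (fst t)))) J"
    using core_exists by blast
  have "T \<noteq> {}" using ex T_def by auto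
  then have "T \<noteq> {} \<and> (\<exists>f :: tgd \<times> (nat \<Rightarrow> term) \<Rightarrow> nat \<Rightarrow> term.
        (\<forall>t\<in>T. (\<forall>x\<in>bvars (fst t). f t x = snd t x)
               \<and> (\<forall>x\<in>evars (fst t). (\<exists>k. f t x = N k) \<and> f t x \<notin> adom I)
               \<and> inj_on (f t) (evars (fst t)))
      \<and> (\<forall>t\<in>T. \<forall>t'\<in>T. t \<noteq> t' \<longrightarrow> f t ` evars (fst t) \<inter> f t' ` evars (fst t') = {})
      \<and> is_core_of (I \<union> (\<Union>t\<in>T. inst (f t) ` set (snd (fst t)))) J)"
    using P1 P2 J by blast
  then have "core_step S I J" unfolding core_step_def Let_def T_def by assumption
  then show ?thesis by blast
qed

definition ltgd :: "bool \<Rightarrow> tgd" where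
  "ltgd c = ([E (V 0) (VC c) (V 1), L (V 1) (V 2)], [L (V 0) (V 3), E (V 3) (VC c) (V 2)])"
definition rtgd :: "bool \<Rightarrow> tgd" where
  "rtgd c = ([R (V 0) (V 1), E (V 0) (VC c) (V 2)], [E (V 1) (VC c) (V 3), R (V 2) (V 3)])"

lemma Sigma_LR_eq: "Sigma_LR = range ltgd \<union> range rtgd"
proof -
  have "range ltgd = {ltgd False, ltgd True}" "range rtgd = {rtgd False, rtgd True}"
    by (simp_all add: UNIV_bool)
  then show ?thesis unfolding Sigma_LR_def ltgd_def rtgd_def by auto
qed

lemma finite_Sigma_R: "finite \<Theta> \<Longrightarrow> finite (Sigma_R \<Theta>)"
proof -
  have "range ltgd = {ltgd False, ltgd True}" "range rtgd = {rtgd False, rtgd True}"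
    by (simp_all add: UNIV_bool)
  moreover assume "finite \<Theta>"
  ultimately show ?thesis unfolding Sigma_R_def Sigma_Theta_def Sigma_LR_eq by simp
qed

lemma inst_E[simp]: "inst h (E a b c) = E (app h a) (app h b) (app h c)"
  and inst_L[simp]: "inst h (L a b) = L (app h a) (app h b)"
  and inst_R[simp]: "inst h (R a b) = R (app h a) (app h b)"
  by (simp_all add: inst_def)

lemma vars_of_simps: "vars_of (a # as) = {x. V x \<in> set_atom a} \<union> vars_of as" "vars_of [] = {}"
  by (auto simp: vars_of_def)

lemma bvars_ltgd: "bvars (ltgd c) = {0,1,2}" and evars_ltgd: "evars (ltgd c) = {3}"
  and bvars_rtgd: "bvars (rtgd c) = {0,1,2}" and evars_rtgd: "evars (rtgd c) = {3}"
  by (auto simp: bvars_def evars_def ltgd_def rtgd_def vars_of_simps)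

lemma rule_body: "fst (rule_tgd (l,r)) = map (\<lambda>i. E (V i) (VC (l!i)) (V (Suc i))) [0..<length l]"
  by (simp add: rule_tgd_def Let_def)

lemma rule_head: "snd (rule_tgd (l,r)) = L (V 0) (V (Suc (length l))) #
   map (\<lambda>j. E (V (Suc (length l) + j)) (VC (r!j)) (V (Suc (Suc (length l)) + j))) [0..<length r]
   @ [R (V (length l)) (V (Suc (length l) + length r))]"
  by (simp add: rule_tgd_def Let_def)

lemma vars_of_def2: "vars_of as = {x. \<exists>a\<in>set as. V x \<in> set_atom a}"
  by (auto simp: vars_of_def)

lemma bvars_rule: assumes "l \<noteq> []" shows "bvars (rule_tgd (l,r)) = {..length l}"
proof -
  have "bvars (rule_tgd (l,r)) = {x. \<exists>i<length l. x = i \<or> x = Suc i}"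
    unfolding bvars_def rule_body vars_of_def2 by auto
  also have "\<dots> = {..length l}"
  proof safe
    fix x assume "x \<le> length l"
    then show "\<exists>i<length l. x = i \<or> x = Suc i"
      using assms by (cases "x < length l") (auto intro: exI[of _ "x - 1"])
  qed auto
  finally show ?thesis .
qed

lemma evars_rule: assumes "l \<noteq> []"
  shows "evars (rule_tgd (l,r)) = {Suc (length l)..Suc (length l) + length r}"
proof -
  have "vars_of (snd (rule_tgd (l,r))) = {0, length l} \<union> {Suc (length l)..Suc (length l) + length r}"
    unfolding rule_head vars_of_def2
  proof (safe, goal_cases)
    case (4 x)
    then show ?case
    proof (cases "x = Suc (length l) + length r")
      case False
      with 4 have "x - Suc (length l) < length r" by auto
      let ?a = "E (V x) (VC (r ! (x - Suc (length l)))) (V (Suc x))"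
      have "?a \<in> (\<lambda>j. E (V (Suc (length l) + j)) (VC (r!j)) (V (Suc (Suc (length l)) + j))) ` {0..<length r}"
        by (rule image_eqI[where x="x - Suc (length l)"]) (use 4 False in auto)
      then show ?thesis by auto
    qed auto
  qed auto
  then show ?thesis unfolding evars_def bvars_rule[OF assms] by auto
qed

definition RuleC :: "(bool list \<times> bool list) set \<Rightarrow> inst_db \<Rightarrow> bool" where
  "RuleC \<Theta> I \<longleftrightarrow> (\<forall>l r g. (l,r) \<in> \<Theta> \<longrightarrow> (\<forall>i<length l. E (g i) (C (l!i)) (g (Suc i)) \<in> I) \<longrightarrow>
     (\<exists>q. L (g 0) (q 0) \<in> I \<and> (\<forall>j<length r. E (q j) (C (r!j)) (q (Suc j)) \<in> I) \<and> R (g (length l)) (q (length r)) \<in> I))"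

definition LeftC :: "inst_db \<Rightarrow> bool" where
  "LeftC I \<longleftrightarrow> (\<forall>a b y c. E a (C c) b \<in> I \<longrightarrow> L b y \<in> I \<longrightarrow> (\<exists>z. L a z \<in> I \<and> E z (C c) y \<in> I))"

definition RightC :: "inst_db \<Rightarrow> bool" where
  "RightC I \<longleftrightarrow> (\<forall>a b z c. R a z \<in> I \<longrightarrow> E a (C c) b \<in> I \<longrightarrow> (\<exists>z'. E z (C c) z' \<in> I \<and> R b z' \<in> I))"

lemma rule_body_sub: "inst h ` set (fst (rule_tgd (l,r))) \<subseteq> I \<longleftrightarrow>
   (\<forall>i<length l. E (h i) (C (l!i)) (h (Suc i)) \<in> I)"
  unfolding rule_body by (auto simp: image_subset_iff)

lemma rule_head_sub: "inst h ` set (snd (rule_tgd (l,r))) \<subseteq> I \<longleftrightarrow>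
   L (h 0) (h (Suc (length l))) \<in> I \<and>
   (\<forall>j<length r. E (h (Suc (length l) + j)) (C (r!j)) (h (Suc (Suc (length l)) + j)) \<in> I) \<and>
   R (h (length l)) (h (Suc (length l) + length r)) \<in> I"
  unfolding rule_head by (auto simp: image_subset_iff)

lemma model_RuleC:
  assumes m: "model (Sigma_R \<Theta>) I" and ne: "\<forall>(l, r)\<in>\<Theta>. l \<noteq> []"
  shows "RuleC \<Theta> I"
  unfolding RuleC_def
proof (intro allI impI)
  fix l r g assume lr: "(l,r) \<in> \<Theta>" and b: "\<forall>i<length l. E (g i) (C (l!i)) (g (Suc i)) \<in> I"
  have l: "l \<noteq> []" using ne lr by auto
  have s: "rule_tgd (l,r) \<in> Sigma_R \<Theta>" using lr by (simp add: Sigma_R_def Sigma_Theta_def)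
  have bb: "inst g ` set (fst (rule_tgd (l,r))) \<subseteq> I" using b by (simp add: rule_body_sub)
  obtain h' where ag: "\<forall>x\<in>bvars (rule_tgd (l,r)). h' x = g x"
    and hd: "inst h' ` set (snd (rule_tgd (l,r))) \<subseteq> I"
    using m[unfolded model_def, rule_format, OF s bb] by (elim exE conjE)
  have a0: "h' 0 = g 0" and an: "h' (length l) = g (length l)" using ag bvars_rule[OF l] by auto
  show "\<exists>q. L (g 0) (q 0) \<in> I \<and> (\<forall>j<length r. E (q j) (C (r!j)) (q (Suc j)) \<in> I) \<and> R (g (length l)) (q (length r)) \<in> I"
    using hd unfolding rule_head_sub a0 an
    by (intro exI[of _ "\<lambda>j. h' (Suc (length l) + j)"]) auto
qed

lemma model_LeftC:
  assumes m: "model (Sigma_R \<Theta>) I" shows "LeftC I"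
  unfolding LeftC_def
proof (intro allI impI)
  fix a b y c assume e: "E a (C c) b \<in> I" and l: "L b y \<in> I"
  have s: "ltgd c \<in> Sigma_R \<Theta>" by (simp add: Sigma_R_def Sigma_LR_eq)
  have bb: "inst (\<lambda>x. if x = 0 then a else if x = 1 then b else y) ` set (fst (ltgd c)) \<subseteq> I"
    using e l by (simp add: ltgd_def)
  obtain h' where ag: "\<forall>x\<in>bvars (ltgd c). h' x = (if x = 0 then a else if x = 1 then b else y)"
    and hd: "inst h' ` set (snd (ltgd c)) \<subseteq> I"
    using m[unfolded model_def, rule_format, OF s bb] by (elim exE conjE)
  have "h' 0 = a" "h' 1 = b" "h' 2 = y" using ag by (simp_all add: bvars_ltgd)
  then show "\<exists>z. L a z \<in> I \<and> E z (C c) y \<in> I" using hd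
    by (intro exI[of _ "h' 3"]) (auto simp: ltgd_def)
qed

lemma model_RightC:
  assumes m: "model (Sigma_R \<Theta>) I" shows "RightC I"
  unfolding RightC_def
proof (intro allI impI)
  fix a b z c assume r: "R a z \<in> I" and e: "E a (C c) b \<in> I"
  have s: "rtgd c \<in> Sigma_R \<Theta>" by (simp add: Sigma_R_def Sigma_LR_eq)
  have bb: "inst (\<lambda>x. if x = 0 then a else if x = 1 then z else b) ` set (fst (rtgd c)) \<subseteq> I"
    using e r by (simp add: rtgd_def)
  obtain h' where ag: "\<forall>x\<in>bvars (rtgd c). h' x = (if x = 0 then a else if x = 1 then z else b)"
    and hd: "inst h' ` set (snd (rtgd c)) \<subseteq> I"
    using m[unfolded model_def, rule_format, OF s bb] by (elim exE conjE)
  have "h' 0 = a" "h' 1 = z" "h' 2 = b" using ag by (simp_all add: bvars_rtgd)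
  then show "\<exists>z'. E z (C c) z' \<in> I \<and> R b z' \<in> I" using hd
    by (intro exI[of _ "h' 3"]) (auto simp: rtgd_def)
qed

lemma model_intro:
  assumes ne: "\<forall>(l, r)\<in>\<Theta>. l \<noteq> []" and RC: "RuleC \<Theta> I" and LC: "LeftC I" and RC2: "RightC I"
  shows "model (Sigma_R \<Theta>) I"
  unfolding model_def
proof (intro ballI allI impI)
  fix \<sigma> h assume s: "\<sigma> \<in> Sigma_R \<Theta>" and b: "inst h ` set (fst \<sigma>) \<subseteq> I"
  show "\<exists>h'. (\<forall>x\<in>bvars \<sigma>. h' x = h x) \<and> inst h' ` set (snd \<sigma>) \<subseteq> I"
  proof -
    consider (rule) l r where "(l,r) \<in> \<Theta>" "\<sigma> = rule_tgd (l,r)" | (left) c where "\<sigma> = ltgd c"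
      | (right) c where "\<sigma> = rtgd c"
      using s unfolding Sigma_R_def Sigma_Theta_def Sigma_LR_eq by auto
    then show ?thesis
    proof cases
      case rule
      have l: "l \<noteq> []" using ne rule by auto
      from b have "\<forall>i<length l. E (h i) (C (l!i)) (h (Suc i)) \<in> I" unfolding rule rule_body_sub .
      with RC rule obtain q where q: "L (h 0) (q 0) \<in> I" "\<forall>j<length r. E (q j) (C (r!j)) (q (Suc j)) \<in> I"
        "R (h (length l)) (q (length r)) \<in> I" unfolding RuleC_def by blast
      define h' where "h' x = (if x \<le> length l then h x else q (x - Suc (length l)))" for x
      have "inst h' ` set (snd \<sigma>) \<subseteq> I" unfolding rule rule_head_sub using q by (simp add: h'_def)
      moreover have "\<forall>x\<in>bvars \<sigma>. h' x = h x" unfolding rule bvars_rule[OF l] by (simp add: h'_def)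
      ultimately show ?thesis by blast
    next
      case left
      from b have "E (h 0) (C c) (h 1) \<in> I" "L (h 1) (h 2) \<in> I" unfolding left by (auto simp: ltgd_def)
      with LC obtain z where "L (h 0) z \<in> I" "E z (C c) (h 2) \<in> I" unfolding LeftC_def by blast
      moreover have "\<forall>x\<in>bvars (ltgd c). (h(3 := z)) x = h x" by (simp add: bvars_ltgd)
      ultimately show ?thesis unfolding left
        by (intro exI[of _ "h(3 := z)"]) (simp add: ltgd_def)
    next
      case right
      from b have "R (h 0) (h 1) \<in> I" "E (h 0) (C c) (h 2) \<in> I" unfolding right by (auto simp: rtgd_def)
      with RC2 obtain z where "E (h 1) (C c) z \<in> I" "R (h 2) z \<in> I" unfolding RightC_def by blast
      moreover have "\<forall>x\<in>bvars (rtgd c). (h(3 := z)) x = h x" by (simp add: bvars_rtgd)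
      ultimately show ?thesis unfolding right
        by (intro exI[of _ "h(3 := z)"]) (simp add: rtgd_def)
    qed
  qed
qed

definition pathf :: "inst_db \<Rightarrow> (nat \<Rightarrow> term) \<Rightarrow> bool list \<Rightarrow> bool" where
  "pathf I g w \<longleftrightarrow> (\<forall>i<length w. E (g i) (C (w!i)) (g (Suc i)) \<in> I)"

lemma left_copy:
  assumes LC: "LeftC I" and px: "\<forall>j<length x. E (g j) (C (x!j)) (g (Suc j)) \<in> I"
  shows "i \<le> length x \<Longrightarrow> L (g i) a \<in> I \<Longrightarrow>
    \<exists>p. p i = a \<and> L (g 0) (p 0) \<in> I \<and> (\<forall>j<i. E (p j) (C (x!j)) (p (Suc j)) \<in> I)"
proof (induction i arbitrary: a)
  case 0
  then show ?case by (intro exI[of _ "\<lambda>_. a"]) auto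
next
  case (Suc i)
  have e: "E (g i) (C (x!i)) (g (Suc i)) \<in> I" using px Suc.prems by auto
  obtain z where z: "L (g i) z \<in> I" "E z (C (x!i)) a \<in> I"
    using LC e Suc.prems(2) unfolding LeftC_def by blast
  obtain p where p: "p i = z" "L (g 0) (p 0) \<in> I" "\<forall>j<i. E (p j) (C (x!j)) (p (Suc j)) \<in> I"
    using Suc.IH[OF _ z(1)] Suc.prems(1) by auto
  have "\<forall>j<Suc i. E ((p(Suc i := a)) j) (C (x!j)) ((p(Suc i := a)) (Suc j)) \<in> I"
  proof (intro allI impI)
    fix j assume "j < Suc i"
    then consider "j < i" | "j = i" by linarith
    then show "E ((p(Suc i := a)) j) (C (x!j)) ((p(Suc i := a)) (Suc j)) \<in> I"
      by cases (use p z in auto)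
  qed
  then show ?case using p by (intro exI[of _ "p(Suc i := a)"]) auto
qed

lemma right_copy:
  assumes RC: "RightC I"
  shows "\<forall>j<length y. E (g (s+j)) (C (y!j)) (g (Suc (s+j))) \<in> I \<Longrightarrow> R (g s) b \<in> I \<Longrightarrow>
    \<exists>p. p 0 = b \<and> (\<forall>j<length y. E (p j) (C (y!j)) (p (Suc j)) \<in> I)"
proof (induction y arbitrary: s b)
  case Nil
  then show ?case by auto
next
  case (Cons c y)
  have e: "E (g s) (C c) (g (Suc s)) \<in> I" using Cons.prems(1) by (metis add_0_right length_Cons nth_Cons_0 zero_less_Suc)
  obtain z where z: "E b (C c) z \<in> I" "R (g (Suc s)) z \<in> I"
    using RC e Cons.prems(2) unfolding RightC_def by blast
  have "\<forall>j<length y. E (g (Suc s+j)) (C (y!j)) (g (Suc (Suc s+j))) \<in> I"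
  proof (intro allI impI)
    fix j assume "j < length y"
    then have "E (g (s + Suc j)) (C ((c#y)!(Suc j))) (g (Suc (s + Suc j))) \<in> I"
      using Cons.prems(1) by auto
    then show "E (g (Suc s+j)) (C (y!j)) (g (Suc (Suc s+j))) \<in> I" by simp
  qed
  from Cons.IH[OF this z(2)] obtain p where p: "p 0 = z" "\<forall>j<length y. E (p j) (C (y!j)) (p (Suc j)) \<in> I"
    by blast
  define p' where "p' j = (if j = 0 then b else p (j - 1))" for j
  have "\<forall>j<length (c#y). E (p' j) (C ((c#y)!j)) (p' (Suc j)) \<in> I"
  proof (intro allI impI)
    fix j assume j: "j < length (c#y)"
    show "E (p' j) (C ((c#y)!j)) (p' (Suc j)) \<in> I"
    proof (cases j)
      case 0 then show ?thesis using z p by (simp add: p'_def)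
    next
      case (Suc j') then show ?thesis using j p by (simp add: p'_def)
    qed
  qed
  then show ?case by (intro exI[of _ p']) (simp add: p'_def)
qed

lemma model_rewrite:
  assumes m: "model (Sigma_R \<Theta>) I" and ne: "\<forall>(l, r)\<in>\<Theta>. l \<noteq> []"
    and pu: "pathf I g u" and rw: "rewrite \<Theta> u v"
  shows "\<exists>g'. pathf I g' v \<and> L (g 0) (g' 0) \<in> I"
proof -
  obtain x y l r where lr: "(l,r) \<in> \<Theta>" and u: "u = x @ l @ y" and v: "v = x @ r @ y"
    using rw unfolding rewrite_def by blast
  define k where "k = length x"
  have RC: "RuleC \<Theta> I" by (rule model_RuleC[OF m ne])
  have LC: "LeftC I" by (rule model_LeftC[OF m])
  have RC2: "RightC I" by (rule model_RightC[OF m])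
  have "\<forall>i<length l. E (g (k + i)) (C (l!i)) (g (Suc (k + i))) \<in> I"
  proof (intro allI impI)
    fix i assume il: "i < length l"
    then have "k + i < length u" unfolding u k_def by simp
    then have "E (g (k+i)) (C (u!(k+i))) (g (Suc (k+i))) \<in> I" using pu unfolding pathf_def by blast
    then show "E (g (k + i)) (C (l!i)) (g (Suc (k + i))) \<in> I" unfolding u k_def using il by (simp add: nth_append)
  qed
  then obtain q where q: "L (g k) (q 0) \<in> I" "\<forall>j<length r. E (q j) (C (r!j)) (q (Suc j)) \<in> I"
    "R (g (k + length l)) (q (length r)) \<in> I"
    using RC[unfolded RuleC_def, rule_format, OF lr, of "\<lambda>i. g (k + i)"] by auto
  have px: "\<forall>j<length x. E (g j) (C (x!j)) (g (Suc j)) \<in> I"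
  proof (intro allI impI)
    fix j assume j: "j < length x"
    then have "j < length u" unfolding u by simp
    then have "E (g j) (C (u!j)) (g (Suc j)) \<in> I" using pu unfolding pathf_def by blast
    then show "E (g j) (C (x!j)) (g (Suc j)) \<in> I" unfolding u using j by (simp add: nth_append)
  qed
  obtain p where p: "p k = q 0" "L (g 0) (p 0) \<in> I" "\<forall>j<k. E (p j) (C (x!j)) (p (Suc j)) \<in> I"
    using left_copy[OF LC px, of k "q 0"] q(1) k_def by auto
  have py: "\<forall>j<length y. E (g ((k + length l)+j)) (C (y!j)) (g (Suc ((k + length l)+j))) \<in> I"
  proof (intro allI impI)
    fix j assume "j < length y"
    then have "k + length l + j < length u" unfolding u k_def by simp
    then have "E (g (k + length l + j)) (C (u!(k + length l + j))) (g (Suc (k + length l + j))) \<in> I"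
      using pu unfolding pathf_def by blast
    then show "E (g ((k + length l)+j)) (C (y!j)) (g (Suc ((k + length l)+j))) \<in> I"
      unfolding u k_def by (simp add: nth_append)
  qed
  obtain p2 where p2: "p2 0 = q (length r)" "\<forall>j<length y. E (p2 j) (C (y!j)) (p2 (Suc j)) \<in> I"
    using right_copy[OF RC2 py q(3)] by blast
  define m where "m = length r"
  define g' where "g' j = (if j \<le> k then p j else if j \<le> k + m then q (j - k) else p2 (j - k - m))" for j
  have "pathf I g' v" unfolding pathf_def
  proof (intro allI impI)
    fix j assume j: "j < length v"
    consider "j < k" | "k \<le> j" "j < k + m" | "k + m \<le> j" by linarith
    then show "E (g' j) (C (v!j)) (g' (Suc j)) \<in> I"
    proof cases
      case 1
      then have "v!j = x!j" unfolding v k_def by (simp add: nth_append)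
      moreover have "g' j = p j" "g' (Suc j) = p (Suc j)" using 1 by (auto simp: g'_def)
      ultimately show ?thesis using p(3) 1 by simp
    next
      case 2
      then have "j - length x < length r" unfolding k_def m_def by linarith
      then have "v!j = r!(j-k)" using 2 unfolding v k_def m_def by (simp add: nth_append)
      moreover have "g' j = q (j - k)" using 2 p(1) by (auto simp: g'_def)
      moreover have "g' (Suc j) = q (Suc (j - k))" using 2 by (auto simp: g'_def Suc_diff_le)
      ultimately show ?thesis using q(2) 2 m_def by simp
    next
      case 3
      then have jy: "j - k - m < length y" using j unfolding v k_def m_def by auto
      have "\<not> j - length x < length r" "\<not> j < length x" using 3 unfolding k_def m_def by linarith+
      then have "v!j = y!(j-k-m)" using 3 unfolding v k_def m_def by (simp add: nth_append)
      moreover have "g' j = p2 (j - k - m)"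
        using 3 p(1) p2(1) by (auto simp: g'_def m_def)
      moreover have "g' (Suc j) = p2 (Suc (j - k - m))" using 3 by (auto simp: g'_def Suc_diff_le)
      ultimately show ?thesis using p2(2) jy by simp
    qed
  qed
  moreover have "g' 0 = p 0" by (simp add: g'_def)
  ultimately show ?thesis using p(2) by auto
qed

definition Inv :: "bool list \<Rightarrow> inst_db \<Rightarrow> bool" where
  "Inv w0 I \<longleftrightarrow> finite I \<and> (\<exists>\<rho>::term \<Rightarrow> nat. \<forall>a b. L a b \<in> I \<longrightarrow> \<rho> a < \<rho> b) \<and> (\<exists>g. pathf I g w0)"

lemma inv_active:
  assumes inv: "Inv w0 I" and ws0: "ws 0 = w0" and wsr: "\<forall>i. rewrite \<Theta> (ws i) (ws (Suc i))"
    and ne: "\<forall>(l, r)\<in>\<Theta>. l \<noteq> []"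
  shows "\<exists>t. active (Sigma_R \<Theta>) I t"
proof (rule ccontr)
  assume "\<not> (\<exists>t. active (Sigma_R \<Theta>) I t)"
  then have m: "model (Sigma_R \<Theta>) I" by (intro no_active_model) blast
  obtain \<rho> :: "term \<Rightarrow> nat" where rho: "\<forall>a b. L a b \<in> I \<longrightarrow> \<rho> a < \<rho> b"
    and fin: "finite I" using inv unfolding Inv_def by blast
  obtain g0 where g0: "pathf I g0 w0" using inv unfolding Inv_def by blast
  define nxt where "nxt j (g :: nat \<Rightarrow> term) = (SOME g'. pathf I g' (ws (Suc j)) \<and> L (g 0) (g' 0) \<in> I)" for j g
  define G where "G j = rec_nat g0 nxt j" for j
  have G0: "G 0 = g0" and GS: "G (Suc j) = nxt j (G j)" for j by (simp_all add: G_def)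
  have P: "pathf I (G j) (ws j) \<and> L (G j 0) (G (Suc j) 0) \<in> I" for j
  proof (induction j)
    case 0
    have "\<exists>g'. pathf I g' (ws (Suc 0)) \<and> L (g0 0) (g' 0) \<in> I"
      using model_rewrite[OF m ne _ wsr[rule_format, of 0]] g0 ws0 by simp
    then have "pathf I (G (Suc 0)) (ws (Suc 0)) \<and> L (g0 0) (G (Suc 0) 0) \<in> I"
      unfolding GS[of 0] G0 nxt_def by (rule someI_ex)
    then show ?case using g0 ws0 G0 by simp
  next
    case (Suc j)
    have "\<exists>g'. pathf I g' (ws (Suc j)) \<and> L (G j 0) (g' 0) \<in> I"
      using model_rewrite[OF m ne _ wsr[rule_format, of j]] Suc.IH by blast
    then have p1: "pathf I (G (Suc j)) (ws (Suc j))"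
      unfolding GS[of j] nxt_def by (rule someI2_ex) blast
    have "\<exists>g'. pathf I g' (ws (Suc (Suc j))) \<and> L (G (Suc j) 0) (g' 0) \<in> I"
      using model_rewrite[OF m ne p1 wsr[rule_format, of "Suc j"]] by blast
    then have "pathf I (G (Suc (Suc j))) (ws (Suc (Suc j))) \<and> L (G (Suc j) 0) (G (Suc (Suc j)) 0) \<in> I"
      unfolding GS[of "Suc j"] nxt_def by (rule someI_ex)
    then show ?case using p1 by simp
  qed
  have rk: "j \<le> \<rho> (G j 0)" for j
  proof (induction j)
    case (Suc j)
    have "\<rho> (G j 0) < \<rho> (G (Suc j) 0)" using P[of j] rho by blast
    then show ?case using Suc.IH by linarith
  qed simp
  have ad: "G j 0 \<in> adom I" for j
    using P[of j] unfolding adom_def by (auto intro!: bexI[of _ "L (G j 0) (G (Suc j) 0)"])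
  define B where "B = Max (\<rho> ` adom I)"
  have "\<rho> (G (Suc B) 0) \<le> B" unfolding B_def using ad finite_adom[OF fin] by simp
  with rk[of "Suc B"] show False by simp
qed

lemma active_new_L:
  assumes ne: "\<forall>(l, r)\<in>\<Theta>. l \<noteq> []" and act: "active (Sigma_R \<Theta>) I t"
    and fb: "\<forall>x\<in>bvars (fst t). f x = snd t x" and fe: "\<forall>x\<in>evars (fst t). f x \<notin> adom I"
    and b: "b \<in> set (snd (fst t))" and L: "inst f b = L u v"
  shows "u \<in> adom I \<and> v \<notin> adom I"
proof -
  have tr: "fst t \<in> Sigma_R \<Theta>" "inst (snd t) ` set (fst (fst t)) \<subseteq> I"
    using act unfolding active_def trigger_def by auto
  have key: "u \<in> adom I \<and> v \<notin> adom I" if "b = L (V x) (V y)" "x \<in> bvars (fst t)" "y \<in> evars (fst t)" for x y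
  proof -
    have "u = f x" "v = f y" using L that(1) by auto
    then show ?thesis using fb fe that bvar_adom[OF _ tr(2)] by auto
  qed
  consider (rule) l r where "(l,r) \<in> \<Theta>" "fst t = rule_tgd (l,r)" | (left) c where "fst t = ltgd c"
      | (right) c where "fst t = rtgd c"
    using tr(1) unfolding Sigma_R_def Sigma_Theta_def Sigma_LR_eq by auto
  then show ?thesis
  proof cases
    case rule
    have l: "l \<noteq> []" using ne rule by auto
    from b L have "b = L (V 0) (V (Suc (length l)))" unfolding rule rule_head by auto
    then show ?thesis using key rule bvars_rule[OF l] evars_rule[OF l] by auto
  next
    case left
    from b L have "b = L (V 0) (V 3)" unfolding left ltgd_def by auto
    then show ?thesis using key left bvars_ltgd evars_ltgd by auto
  next
    case right
    from b L show ?thesis unfolding right rtgd_def by auto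
  qed
qed

lemma core_step_L:
  assumes ne: "\<forall>(l, r)\<in>\<Theta>. l \<noteq> []" and st: "core_step (Sigma_R \<Theta>) I J"
  shows "\<exists>K. is_core_of K J \<and> I \<subseteq> K \<and> (\<forall>u v. L u v \<in> K \<longrightarrow> L u v \<in> I \<or> (u \<in> adom I \<and> v \<notin> adom I))"
proof -
  obtain f where f1: "\<forall>t\<in>{t. active (Sigma_R \<Theta>) I t}. (\<forall>x\<in>bvars (fst t). f t x = snd t x)
               \<and> (\<forall>x\<in>evars (fst t). (\<exists>k. f t x = N k) \<and> f t x \<notin> adom I)
               \<and> inj_on (f t) (evars (fst t))"
    and "\<forall>t\<in>{t. active (Sigma_R \<Theta>) I t}. \<forall>t'\<in>{t. active (Sigma_R \<Theta>) I t}. t \<noteq> t' \<longrightarrow> f t ` evars (fst t) \<inter> f t' ` evars (fst t') = {}"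
    and c: "is_core_of (I \<union> (\<Union>t\<in>{t. active (Sigma_R \<Theta>) I t}. inst (f t) ` set (snd (fst t)))) J"
    by (rule core_step_unfold[OF st])
  define K where "K = I \<union> (\<Union>t\<in>{t. active (Sigma_R \<Theta>) I t}. inst (f t) ` set (snd (fst t)))"
  have key: "L u v \<in> I \<or> (u \<in> adom I \<and> v \<notin> adom I)"
    if "L u v \<in> K" for u v
  proof (cases "L u v \<in> I")
    case False
    from that False have "L u v \<in> (\<Union>t\<in>{t. active (Sigma_R \<Theta>) I t}. inst (f t) ` set (snd (fst t)))"
      unfolding K_def by simp
    then obtain t where t0: "t \<in> {t. active (Sigma_R \<Theta>) I t}" and tt0: "L u v \<in> inst (f t) ` set (snd (fst t))"
      by (rule UN_E)
    from tt0 obtain b where b: "b \<in> set (snd (fst t))" and e: "L u v = inst (f t) b" by (rule imageE)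
    have t: "active (Sigma_R \<Theta>) I t" using t0 by simp
    note e = e[symmetric]
    have tt: "t \<in> {t. active (Sigma_R \<Theta>) I t}" using t by simp
    note ft = bspec[OF f1 tt]
    have fb: "\<forall>x\<in>bvars (fst t). f t x = snd t x" by (rule conjunct1[OF ft])
    have "\<forall>x\<in>evars (fst t). (\<exists>k. f t x = N k) \<and> f t x \<notin> adom I" by (rule conjunct1[OF conjunct2[OF ft]])
    then have "\<forall>x\<in>evars (fst t). f t x \<notin> adom I" by blast
    note fb this
    from active_new_L[OF ne t this b e] show ?thesis by simp
  qed simp
  have "is_core_of K J" using c unfolding K_def .
  moreover have "I \<subseteq> K" unfolding K_def by (rule Un_upper1)
  ultimately show ?thesis using key by blast
qed

lemma hom_path: assumes "hom c K J" "pathf K g w" shows "pathf J (c \<circ> g) w"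
  unfolding pathf_def
proof (intro allI impI)
  fix i assume "i < length w"
  then have "E (g i) (C (w!i)) (g (Suc i)) \<in> K" using assms(2) unfolding pathf_def by blast
  then have "map_atom c (E (g i) (C (w!i)) (g (Suc i))) \<in> J" using assms(1) unfolding hom_def by blast
  moreover have "c (C (w!i)) = C (w!i)" using assms(1) unfolding hom_def by blast
  ultimately show "E ((c \<circ> g) i) (C (w!i)) ((c \<circ> g) (Suc i)) \<in> J" by simp
qed

lemma inv_step:
  assumes ne: "\<forall>(l, r)\<in>\<Theta>. l \<noteq> []" and fT: "finite \<Theta>" and st: "core_step (Sigma_R \<Theta>) I J"
    and inv: "Inv w0 I"
  shows "Inv w0 J"
proof -
  obtain \<rho> :: "term \<Rightarrow> nat" where rho: "\<forall>a b. L a b \<in> I \<longrightarrow> \<rho> a < \<rho> b"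
    and fin: "finite I" using inv unfolding Inv_def by blast
  obtain g where g: "pathf I g w0" using inv unfolding Inv_def by blast
  obtain K where c: "is_core_of K J" and IK: "I \<subseteq> K"
    and LK: "\<forall>u v. L u v \<in> K \<longrightarrow> L u v \<in> I \<or> (u \<in> adom I \<and> v \<notin> adom I)"
    using core_step_L[OF ne st] by blast
  have finJ: "finite J" by (rule finite_core_step[OF finite_Sigma_R[OF fT] fin st])
  obtain h where h: "hom h K J" using c unfolding is_core_of_def by blast
  have "pathf K g w0" using g IK unfolding pathf_def by blast
  then have pJ: "pathf J (h \<circ> g) w0" by (rule hom_path[OF h])
  define M where "M = Max (\<rho> ` adom I)"
  define \<rho>' where "\<rho>' z = (if z \<in> adom I then \<rho> z else Suc M)" for z
  have "\<forall>a b. L a b \<in> J \<longrightarrow> \<rho>' a < \<rho>' b"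
  proof (intro allI impI)
    fix a b assume "L a b \<in> J"
    then have "L a b \<in> K" using c unfolding is_core_of_def by blast
    then consider "L a b \<in> I" | "a \<in> adom I" "b \<notin> adom I" using LK by blast
    then show "\<rho>' a < \<rho>' b"
    proof cases
      case 1
      then have "a \<in> adom I" "b \<in> adom I" unfolding adom_def by (auto intro!: bexI[of _ "L a b"])
      then show ?thesis using rho 1 by (simp add: \<rho>'_def)
    next
      case 2
      have "\<rho> a \<le> M" unfolding M_def using 2 finite_adom[OF fin] by simp
      then show ?thesis using 2 by (simp add: \<rho>'_def)
    qed
  qed
  then show ?thesis unfolding Inv_def using finJ pJ by blast
qed

lemma word_instance_Inv: "Inv w0 (word_instance w0)"
proof -
  have "word_instance w0 = (\<lambda>i. E (N i) (C (w0 ! i)) (N (Suc i))) ` {..<length w0}"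
    unfolding word_instance_def by auto
  then have "finite (word_instance w0)" by simp
  moreover have "\<forall>a b. L a b \<in> word_instance w0 \<longrightarrow> (\<lambda>_. 0::nat) a < (\<lambda>_. 0) b"
    unfolding word_instance_def by auto
  moreover have "pathf (word_instance w0) N w0" unfolding pathf_def word_instance_def by auto
  ultimately show ?thesis unfolding Inv_def by (intro conjI exI)
qed

lemma deriv_imp_chase:
  assumes fT: "finite \<Theta>" and ne: "\<forall>(l, r)\<in>\<Theta>. l \<noteq> []"
    and ws0: "ws 0 = w0" and wsr: "\<forall>i. rewrite \<Theta> (ws i) (ws (Suc i))"
  shows "core_chase_infinite (Sigma_R \<Theta>) (word_instance w0)"
proof -
  let ?S = "Sigma_R \<Theta>"
  have ex: "\<exists>J. core_step ?S I J \<and> Inv w0 J" if "Inv w0 I" for I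
  proof -
    have "\<exists>t. active ?S I t" by (rule inv_active[OF that ws0 wsr ne])
    moreover have "finite I" using that unfolding Inv_def by (rule conjunct1)
    ultimately obtain J where "core_step ?S I J"
      using core_step_exists[OF finite_Sigma_R[OF fT]] by blast
    then show ?thesis using inv_step[OF ne fT _ that] by blast
  qed
  define nxt where "nxt I = (SOME J. core_step ?S I J \<and> Inv w0 J)" for I
  define seq where "seq i = rec_nat (word_instance w0) (\<lambda>_. nxt) i" for i
  have s0: "seq 0 = word_instance w0" and sS: "seq (Suc i) = nxt (seq i)" for i
    by (simp_all add: seq_def)
  have "Inv w0 (seq i) \<and> core_step ?S (seq i) (seq (Suc i))" for i
  proof (induction i)
    case 0
    have "core_step ?S (seq 0) (nxt (seq 0)) \<and> Inv w0 (nxt (seq 0))"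
      unfolding nxt_def by (rule someI_ex[OF ex]) (simp add: s0 word_instance_Inv)
    then show ?case using s0 sS word_instance_Inv by simp
  next
    case (Suc i)
    then have "core_step ?S (seq i) (nxt (seq i)) \<and> Inv w0 (nxt (seq i))"
      unfolding nxt_def by (intro someI_ex[OF ex]) blast
    then have iS: "Inv w0 (seq (Suc i))" by (simp add: sS)
    have "core_step ?S (seq (Suc i)) (nxt (seq (Suc i))) \<and> Inv w0 (nxt (seq (Suc i)))"
      unfolding nxt_def by (rule someI_ex[OF ex[OF iS]])
    then show ?case using sS iS by simp
  qed
  then show ?thesis unfolding core_chase_infinite_def using s0 by blast
qed

lemma map_atom_adom_cong:
  assumes "a \<in> I" "\<And>z. z \<in> adom I \<Longrightarrow> g' z = g z"
  shows "map_atom g' a = map_atom g a"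
proof (rule atom.map_cong0)
  fix z assume "z \<in> set_atom a"
  then have "z \<in> adom I" using assms(1) unfolding adom_def by blast
  then show "g' z = g z" by (rule assms(2))
qed

lemma hom_mono: "hom g A B \<Longrightarrow> A' \<subseteq> A \<Longrightarrow> hom g A' B"
  unfolding hom_def by blast

lemma chase_to_model:
  assumes m: "model S U" and st: "core_step S I J" and hg: "hom g I U"
  shows "\<exists>g'. hom g' J U"
proof -
  define T where "T = {t. active S I t}"
  obtain f where f1: "\<forall>t\<in>T. (\<forall>x\<in>bvars (fst t). f t x = snd t x)
               \<and> (\<forall>x\<in>evars (fst t). (\<exists>k. f t x = N k) \<and> f t x \<notin> adom I)
               \<and> inj_on (f t) (evars (fst t))"
    and f2: "\<forall>t\<in>T. \<forall>t'\<in>T. t \<noteq> t' \<longrightarrow> f t ` evars (fst t) \<inter> f t' ` evars (fst t') = {}"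
    and c: "is_core_of (I \<union> (\<Union>t\<in>T. inst (f t) ` set (snd (fst t)))) J"
    unfolding T_def by (rule core_step_unfold[OF st])
  define K where "K = I \<union> (\<Union>t\<in>T. inst (f t) ` set (snd (fst t)))"
  have gC: "\<forall>c. g (C c) = C c" using hg unfolding hom_def by blast
  have trig: "fst t \<in> S \<and> inst (snd t) ` set (fst (fst t)) \<subseteq> I" if "t \<in> T" for t
    using that unfolding T_def active_def trigger_def by blast
  have exW: "\<exists>h1. (\<forall>x\<in>bvars (fst t). h1 x = g (snd t x)) \<and> inst h1 ` set (snd (fst t)) \<subseteq> U"
    if t: "t \<in> T" for t
  proof -
    have "inst (g \<circ> snd t) ` set (fst (fst t)) \<subseteq> U"
    proof
      fix a assume "a \<in> inst (g \<circ> snd t) ` set (fst (fst t))"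
      then obtain b where b: "b \<in> set (fst (fst t))" "a = inst (g \<circ> snd t) b" by blast
      then have "a = map_atom g (inst (snd t) b)" using inst_comp[OF gC] by simp
      moreover have "inst (snd t) b \<in> I" using trig[OF t] b by blast
      ultimately show "a \<in> U" using hg unfolding hom_def by blast
    qed
    from m[unfolded model_def, rule_format, OF conjunct1[OF trig[OF t]] this]
    show ?thesis by simp
  qed
  define W where "W t = (SOME h1. (\<forall>x\<in>bvars (fst t). h1 x = g (snd t x)) \<and> inst h1 ` set (snd (fst t)) \<subseteq> U)" for t
  have W: "(\<forall>x\<in>bvars (fst t). W t x = g (snd t x)) \<and> inst (W t) ` set (snd (fst t)) \<subseteq> U" if "t \<in> T" for t
    unfolding W_def by (rule someI_ex[OF exW[OF that]])
  define P where "P z p \<longleftrightarrow> fst p \<in> T \<and> snd p \<in> evars (fst (fst p)) \<and> f (fst p) (snd p) = z" for z p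
  define g' where "g' z = (if z \<in> adom I then g z else if (\<exists>p. P z p) then W (fst (SOME p. P z p)) (snd (SOME p. P z p)) else z)" for z
  have key: "g' (f t x) = W t x" if t: "t \<in> T" and x: "x \<in> evars (fst t)" for t x
  proof -
    have nad: "f t x \<notin> adom I" using f1 t x by blast
    have "P (f t x) (t, x)" unfolding P_def using t x by simp
    then have Pp: "P (f t x) (SOME p. P (f t x) p)" by (rule someI)
    define p where "p = (SOME p. P (f t x) p)"
    have p: "fst p \<in> T" "snd p \<in> evars (fst (fst p))" "f (fst p) (snd p) = f t x"
      using Pp unfolding P_def p_def by auto
    have "fst p = t"
    proof (rule ccontr)
      assume "fst p \<noteq> t"
      then have "f (fst p) ` evars (fst (fst p)) \<inter> f t ` evars (fst t) = {}" using f2 p(1) t by blast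
      then show False using p x by blast
    qed
    moreover have "inj_on (f t) (evars (fst t))" using f1 t by blast
    ultimately have "snd p = x" using p x by (auto dest: inj_onD)
    have ex: "\<exists>p. P (f t x) p" using \<open>P (f t x) (t, x)\<close> by blast
    have "g' (f t x) = W (fst p) (snd p)" unfolding g'_def p_def using nad ex by simp
    then show ?thesis using \<open>snd p = x\<close> \<open>fst p = t\<close> by simp
  qed
  have g'C: "\<forall>c. g' (C c) = C c"
  proof
    fix c
    have "\<not> P (C c) p" for p
    proof
      assume "P (C c) p"
      then have "fst p \<in> T" "snd p \<in> evars (fst (fst p))" "f (fst p) (snd p) = C c" unfolding P_def by auto
      then show False using f1 by fastforce
    qed
    then show "g' (C c) = C c" unfolding g'_def using gC by auto
  qed
  have "map_atom g' a \<in> U" if a: "a \<in> K" for a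
  proof (cases "a \<in> I")
    case True
    then have "map_atom g' a = map_atom g a" by (rule map_atom_adom_cong) (simp add: g'_def)
    then show ?thesis using True hg unfolding hom_def by auto
  next
    case False
    with a obtain t b where t: "t \<in> T" and b: "b \<in> set (snd (fst t))" and ab: "a = inst (f t) b"
      unfolding K_def by blast
    have "inst (g' \<circ> f t) b = inst (W t) b"
    proof (rule inst_cong)
      fix x assume "V x \<in> set_atom b"
      then consider "x \<in> bvars (fst t)" | "x \<in> evars (fst t)" using head_vars[OF b] by blast
      then show "(g' \<circ> f t) x = W t x"
      proof cases
        case 1
        then have "f t x = snd t x" using f1 t by blast
        moreover have "snd t x \<in> adom I" using bvar_adom[OF 1] trig[OF t] by blast
        ultimately show ?thesis using W[OF t] 1 by (simp add: g'_def)
      next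
        case 2
        then show ?thesis using key[OF t] by simp
      qed
    qed
    then have "map_atom g' a = inst (W t) b" using ab inst_comp[OF g'C] by simp
    then show ?thesis using W[OF t] b by blast
  qed
  then have "hom g' K U" unfolding hom_def using g'C by blast
  moreover have "J \<subseteq> K" using c unfolding is_core_of_def K_def by blast
  ultimately show ?thesis using hom_mono by blast
qed

lemma adom_image: "adom (map_atom \<phi> ` J) = \<phi> ` adom J"
  unfolding adom_def by (auto simp: atom.set_map)

lemma core_equiv_model:
  assumes c: "is_core_of K J" and fJ: "finite J" and m: "model S U"
    and he: "hom e J U" and hu: "hom u U J"
  shows "model S J"
proof -
  define \<phi> where "\<phi> = u \<circ> e"
  have h\<phi>: "hom \<phi> J J" unfolding \<phi>_def by (rule hom_comp[OF he order_refl hu])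
  have \<phi>C: "\<forall>c. \<phi> (C c) = C c" using h\<phi> unfolding hom_def by blast
  obtain hc where hc: "hom hc K J" using c unfolding is_core_of_def by blast
  define J' where "J' = map_atom \<phi> ` J"
  have J'J: "J' \<subseteq> J" using h\<phi> unfolding hom_def J'_def by blast
  have "hom (\<phi> \<circ> hc) K J'"
  proof -
    have "hom \<phi> J J'" unfolding hom_def J'_def using \<phi>C by blast
    then show ?thesis by (rule hom_comp[OF hc order_refl])
  qed
  then have "\<not> J' \<subset> J" using c unfolding is_core_of_def by blast
  then have JJ: "J' = J" using J'J by blast
  have fad: "finite (adom J)" by (rule finite_adom[OF fJ])
  have surj: "\<phi> ` adom J = adom J" using adom_image[of \<phi> J] JJ unfolding J'_def by simp
  have inj: "inj_on \<phi> (adom J)" using fad surj by (simp add: finite_surj_inj)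
  define \<psi> where "\<psi> z = (if z \<in> adom J then inv_into (adom J) \<phi> z else z)" for z
  have \<psi>\<phi>: "\<psi> (\<phi> z) = z" if "z \<in> adom J" for z
    using that inj surj unfolding \<psi>_def by (auto simp: inv_into_f_f)
  have \<psi>C: "\<forall>c. \<psi> (C c) = C c"
  proof
    fix c show "\<psi> (C c) = C c"
    proof (cases "C c \<in> adom J")
      case True
      then have "\<psi> (\<phi> (C c)) = C c" by (rule \<psi>\<phi>)
      then show ?thesis using \<phi>C by simp
    qed (simp add: \<psi>_def)
  qed
  have \<psi>J: "map_atom \<psi> b \<in> J" if "b \<in> J" for b
  proof -
    from that JJ obtain b' where b': "b' \<in> J" "b = map_atom \<phi> b'" unfolding J'_def by blast
    have "map_atom \<psi> (map_atom \<phi> b') = map_atom (\<psi> \<circ> \<phi>) b'" by (simp add: atom.map_comp)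
    also have "\<dots> = map_atom id b'"
      by (rule map_atom_adom_cong[OF b'(1)]) (simp add: \<psi>\<phi>)
    finally show ?thesis using b' by (simp add: atom.map_id)
  qed
  have eC: "\<forall>c. e (C c) = C c" and uC: "\<forall>c. u (C c) = C c" using he hu unfolding hom_def by blast+
  show ?thesis unfolding model_def
  proof (intro ballI allI impI)
    fix \<sigma> h assume s: "\<sigma> \<in> S" and b: "inst h ` set (fst \<sigma>) \<subseteq> J"
    have "inst (e \<circ> h) ` set (fst \<sigma>) \<subseteq> U"
    proof
      fix a assume "a \<in> inst (e \<circ> h) ` set (fst \<sigma>)"
      then obtain b0 where b0: "b0 \<in> set (fst \<sigma>)" "a = inst (e \<circ> h) b0" by blast
      then have "a = map_atom e (inst h b0)" using inst_comp[OF eC] by simp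
      moreover have "inst h b0 \<in> J" using b b0 by blast
      ultimately show "a \<in> U" using he unfolding hom_def by blast
    qed
    from m[unfolded model_def, rule_format, OF s this] obtain h1 where
      h1: "\<forall>x\<in>bvars \<sigma>. h1 x = (e \<circ> h) x" "inst h1 ` set (snd \<sigma>) \<subseteq> U" by blast
    define h2 where "h2 = \<psi> \<circ> (u \<circ> h1)"
    have "\<forall>x\<in>bvars \<sigma>. h2 x = h x"
    proof
      fix x assume x: "x \<in> bvars \<sigma>"
      have "h x \<in> adom J" by (rule bvar_adom[OF x b])
      then show "h2 x = h x" using h1(1) x \<psi>\<phi> unfolding h2_def \<phi>_def by simp
    qed
    moreover have "inst h2 ` set (snd \<sigma>) \<subseteq> J"
    proof
      fix a assume "a \<in> inst h2 ` set (snd \<sigma>)"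
      then obtain b0 where b0: "b0 \<in> set (snd \<sigma>)" "a = inst h2 b0" by blast
      then have "a = map_atom \<psi> (map_atom u (inst h1 b0))"
        unfolding h2_def using inst_comp[OF \<psi>C] inst_comp[OF uC] by simp
      moreover have "map_atom u (inst h1 b0) \<in> J" using h1(2) b0 hu unfolding hom_def by blast
      ultimately show "a \<in> J" using \<psi>J by simp
    qed
    ultimately show "\<exists>h'. (\<forall>x\<in>bvars \<sigma>. h' x = h x) \<and> inst h' ` set (snd \<sigma>) \<subseteq> J" by blast
  qed
qed

lemma extend_step:
  assumes st: "core_step S I J" and hg: "hom g A I" and s: "\<sigma> \<in> S"
    and body: "inst h ` set (fst \<sigma>) \<subseteq> A" and agree: "\<forall>x\<in>bvars \<sigma>. h' x = h x"
    and fresh: "\<forall>x\<in>evars \<sigma>. h' x \<notin> adom A \<and> (\<exists>n. h' x = N n)" and inj: "inj_on h' (evars \<sigma>)"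
  shows "\<exists>g'. hom g' (A \<union> inst h' ` set (snd \<sigma>)) J"
proof -
  obtain K where c: "is_core_of K J" and IK: "I \<subseteq> K" and sat: "\<forall>\<sigma>\<in>S. \<forall>h. inst h ` set (fst \<sigma>) \<subseteq> I \<longrightarrow>
      (\<exists>h2. (\<forall>x\<in>bvars \<sigma>. h2 x = h x) \<and> inst h2 ` set (snd \<sigma>) \<subseteq> K)"
    using core_step_K[OF st] by blast
  have gC: "\<forall>c. g (C c) = C c" using hg unfolding hom_def by blast
  have "inst (g \<circ> h) ` set (fst \<sigma>) \<subseteq> I"
  proof
    fix a assume "a \<in> inst (g \<circ> h) ` set (fst \<sigma>)"
    then obtain b0 where b0: "b0 \<in> set (fst \<sigma>)" "a = inst (g \<circ> h) b0" by blast
    then have "a = map_atom g (inst h b0)" using inst_comp[OF gC] by simp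
    moreover have "inst h b0 \<in> A" using body b0 by blast
    ultimately show "a \<in> I" using hg unfolding hom_def by blast
  qed
  from sat[rule_format, OF s this] obtain h2 where
    h2: "\<forall>x\<in>bvars \<sigma>. h2 x = (g \<circ> h) x" "inst h2 ` set (snd \<sigma>) \<subseteq> K" by blast
  define g' where "g' z = (if z \<in> adom A then g z else if z \<in> h' ` evars \<sigma> then h2 (inv_into (evars \<sigma>) h' z) else z)" for z
  have g'C: "\<forall>c. g' (C c) = C c"
  proof
    fix c
    have "C c \<notin> h' ` evars \<sigma>" using fresh by fastforce
    then show "g' (C c) = C c" unfolding g'_def using gC by auto
  qed
  have "map_atom g' a \<in> K" if a: "a \<in> A \<union> inst h' ` set (snd \<sigma>)" for a
  proof (cases "a \<in> A")
    case True
    then have "map_atom g' a = map_atom g a" by (rule map_atom_adom_cong) (simp add: g'_def)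
    then show ?thesis using True hg IK unfolding hom_def by auto
  next
    case False
    with a obtain b where b: "b \<in> set (snd \<sigma>)" and ab: "a = inst h' b" by blast
    have "inst (g' \<circ> h') b = inst h2 b"
    proof (rule inst_cong)
      fix x assume "V x \<in> set_atom b"
      then consider "x \<in> bvars \<sigma>" | "x \<in> evars \<sigma>" using head_vars[OF b] by blast
      then show "(g' \<circ> h') x = h2 x"
      proof cases
        case 1
        then have "h x \<in> adom A" by (rule bvar_adom[OF _ body])
        then show ?thesis using 1 agree h2(1) by (simp add: g'_def)
      next
        case 2
        then have "h' x \<notin> adom A" using fresh by blast
        then show ?thesis using 2 inj by (simp add: g'_def inv_into_f_f)
      qed
    qed
    then have "map_atom g' a = inst h2 b" using ab inst_comp[OF g'C] by simp
    then show ?thesis using h2(2) b by blast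
  qed
  then have "hom g' (A \<union> inst h' ` set (snd \<sigma>)) K" unfolding hom_def using g'C by blast
  moreover obtain hc where "hom hc K J" using c unfolding is_core_of_def by blast
  ultimately show ?thesis using hom_comp[OF _ order_refl] by blast
qed

type_synonym hist = "(nat \<times> bool list \<times> bool list) list"

fun hword :: "bool list \<Rightarrow> hist \<Rightarrow> bool list" where
  "hword w0 [] = w0"
| "hword w0 ((k,l,r)#H) = take k (hword w0 H) @ r @ drop (k + length l) (hword w0 H)"

fun hvalid :: "(bool list \<times> bool list) set \<Rightarrow> bool list \<Rightarrow> hist \<Rightarrow> bool" where
  "hvalid \<Theta> w0 [] = True"
| "hvalid \<Theta> w0 ((k,l,r)#H) = (hvalid \<Theta> w0 H \<and> (l,r) \<in> \<Theta> \<and> k + length l \<le> length (hword w0 H)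
     \<and> take (length l) (drop k (hword w0 H)) = l)"

lemma hvalid_rewrite:
  assumes "hvalid \<Theta> w0 ((k,l,r)#H)"
  shows "rewrite \<Theta> (hword w0 H) (hword w0 ((k,l,r)#H))"
proof -
  let ?w = "hword w0 H"
  have "?w = take k ?w @ take (length l) (drop k ?w) @ drop (length l) (drop k ?w)"
    by (simp only: append_take_drop_id)
  also have "take (length l) (drop k ?w) = l" using assms by simp
  also have "drop (length l) (drop k ?w) = drop (k + length l) ?w" by (simp add: add.commute)
  finally have "?w = take k ?w @ l @ drop (k + length l) ?w" .
  then show ?thesis using assms unfolding rewrite_def by auto
qed

lemma hvalid_suffix: "hvalid \<Theta> w0 (G @ H) \<Longrightarrow> hvalid \<Theta> w0 H"
  by (induction G) (auto split: prod.splits)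

lemma finite_steps:
  assumes "finite \<Theta>"
  shows "finite {s. hvalid \<Theta> w0 (s#H)}"
proof -
  have "{s. hvalid \<Theta> w0 (s#H)} \<subseteq> (\<lambda>(k,lr). (k, fst lr, snd lr)) ` ({..length (hword w0 H)} \<times> \<Theta>)"
  proof
    fix s assume "s \<in> {s. hvalid \<Theta> w0 (s#H)}"
    moreover obtain k l r where s: "s = (k,l,r)" by (cases s) auto
    ultimately have "k \<le> length (hword w0 H)" "(l,r) \<in> \<Theta>" by auto
    then show "s \<in> (\<lambda>(k,lr). (k, fst lr, snd lr)) ` ({..length (hword w0 H)} \<times> \<Theta>)"
      unfolding s by (auto intro!: image_eqI[of _ _ "(k,(l,r))"])
  qed
  then show ?thesis by (rule finite_subset) (use assms in auto)
qed

lemma ext_decomp: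
  assumes "hvalid \<Theta> w0 H"
  shows "{G. hvalid \<Theta> w0 (G @ H)} \<subseteq> {[]} \<union>
    (\<Union>s\<in>{s. hvalid \<Theta> w0 (s#H)}. (\<lambda>G. G @ [s]) ` {G. hvalid \<Theta> w0 (G @ (s#H))})"
proof
  fix G assume G: "G \<in> {G. hvalid \<Theta> w0 (G @ H)}"
  show "G \<in> {[]} \<union> (\<Union>s\<in>{s. hvalid \<Theta> w0 (s#H)}. (\<lambda>G. G @ [s]) ` {G. hvalid \<Theta> w0 (G @ (s#H))})"
  proof (cases G rule: rev_exhaust)
    case (snoc G' s)
    then have "hvalid \<Theta> w0 (G' @ (s#H))" using G by simp
    moreover then have "hvalid \<Theta> w0 (s#H)" by (rule hvalid_suffix)
    ultimately show ?thesis using snoc by blast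
  qed simp
qed

lemma inf_child:
  assumes fT: "finite \<Theta>" and v: "hvalid \<Theta> w0 H" and inf: "infinite {G. hvalid \<Theta> w0 (G @ H)}"
  shows "\<exists>s. hvalid \<Theta> w0 (s#H) \<and> infinite {G. hvalid \<Theta> w0 (G @ (s#H))}"
proof (rule ccontr)
  assume "\<not> ?thesis"
  then have "\<forall>s\<in>{s. hvalid \<Theta> w0 (s#H)}. finite {G. hvalid \<Theta> w0 (G @ (s#H))}" by blast
  then have "finite ({[]} \<union> (\<Union>s\<in>{s. hvalid \<Theta> w0 (s#H)}. (\<lambda>G. G @ [s]) ` {G. hvalid \<Theta> w0 (G @ (s#H))}))"
    using finite_steps[OF fT] by blast
  then show False using inf ext_decomp[OF v] finite_subset by blast
qed

lemma finite_hvalid: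
  assumes fT: "finite \<Theta>" and noinf: "\<not> (\<exists>ws. ws 0 = w0 \<and> (\<forall>i. rewrite \<Theta> (ws i) (ws (Suc i))))"
  shows "finite {H. hvalid \<Theta> w0 H}"
proof (rule ccontr)
  assume inf0: "infinite {H. hvalid \<Theta> w0 H}"
  define P where "P H \<longleftrightarrow> hvalid \<Theta> w0 H \<and> infinite {G. hvalid \<Theta> w0 (G @ H)}" for H
  define stp where "stp H = (SOME s. P (s#H))" for H
  define Hc where "Hc i = rec_nat [] (\<lambda>_ H. stp H # H) i" for i
  have H0: "Hc 0 = []" and HS: "Hc (Suc i) = stp (Hc i) # Hc i" for i by (simp_all add: Hc_def)
  have PH: "P (Hc i)" for i
  proof (induction i)
    case 0 then show ?case using inf0 by (simp add: H0 P_def)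
  next
    case (Suc i)
    then have "\<exists>s. P (s # Hc i)" using inf_child[OF fT] unfolding P_def by blast
    then show ?case unfolding HS stp_def by (rule someI_ex)
  qed
  define ws where "ws i = hword w0 (Hc i)" for i
  have "rewrite \<Theta> (ws i) (ws (Suc i))" for i
  proof -
    obtain k l r where s: "stp (Hc i) = (k,l,r)" by (cases "stp (Hc i)") auto
    have "hvalid \<Theta> w0 ((k,l,r) # Hc i)" using PH[of "Suc i"] unfolding HS s P_def by simp
    then show ?thesis unfolding ws_def HS s by (rule hvalid_rewrite)
  qed
  moreover have "ws 0 = w0" by (simp add: ws_def H0)
  ultimately show False using noinf by blast
qed

definition nd :: "hist \<Rightarrow> nat \<Rightarrow> term" where
  "nd H i = N (to_nat (H, i))"

lemma nd_inj[simp]: "nd H i = nd H' j \<longleftrightarrow> H = H' \<and> i = j"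
  unfolding nd_def by simp

lemma nd_not_C[simp]: "nd H i \<noteq> C c"
  unfolding nd_def by simp

definition Uset :: "bool list \<Rightarrow> hist set \<Rightarrow> inst_db" where
  "Uset w0 F = {E (nd H i) (C (hword w0 H ! i)) (nd H (Suc i)) | H i. H \<in> F \<and> i < length (hword w0 H)}
   \<union> {L (nd H i) (nd ((k,l,r)#H) i) | H k l r i. (k,l,r)#H \<in> F \<and> i \<le> k}
   \<union> {R (nd H (k + length l + j)) (nd ((k,l,r)#H) (k + length r + j)) | H k l r j.
        (k,l,r)#H \<in> F \<and> k + length l + j \<le> length (hword w0 H)}"

lemma E_in_U: "E a b c \<in> Uset w0 F \<longleftrightarrow>
  (\<exists>H i. H \<in> F \<and> i < length (hword w0 H) \<and> a = nd H i \<and> b = C (hword w0 H ! i) \<and> c = nd H (Suc i))"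
  unfolding Uset_def by blast

lemma L_in_U: "L a b \<in> Uset w0 F \<longleftrightarrow>
  (\<exists>H k l r i. (k,l,r)#H \<in> F \<and> i \<le> k \<and> a = nd H i \<and> b = nd ((k,l,r)#H) i)"
  unfolding Uset_def by blast

lemma R_in_U: "R a b \<in> Uset w0 F \<longleftrightarrow>
  (\<exists>H k l r j. (k,l,r)#H \<in> F \<and> k + length l + j \<le> length (hword w0 H) \<and>
     a = nd H (k + length l + j) \<and> b = nd ((k,l,r)#H) (k + length r + j))"
  unfolding Uset_def by blast

lemma hword_len:
  assumes "k + length l \<le> length (hword w0 H)"
  shows "length (hword w0 ((k,l,r)#H)) = k + length r + (length (hword w0 H) - k - length l)"
  using assms by simp

lemma hword_nth_pre: "k \<le> length (hword w0 H) \<Longrightarrow> i < k \<Longrightarrow> hword w0 ((k,l,r)#H) ! i = hword w0 H ! i"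
  by (simp add: nth_append)

lemma hword_nth_mid: "k \<le> length (hword w0 H) \<Longrightarrow> j < length r \<Longrightarrow> hword w0 ((k,l,r)#H) ! (k + j) = r ! j"
  by (simp add: nth_append min_def)

lemma hword_nth_suf: "k + length l \<le> length (hword w0 H) \<Longrightarrow> k + length l + j < length (hword w0 H) \<Longrightarrow>
   hword w0 ((k,l,r)#H) ! (k + length r + j) = hword w0 H ! (k + length l + j)"
  by (simp add: nth_append min_def add.commute add.left_commute)

lemma U_RuleC:
  assumes ne: "\<forall>(l, r)\<in>\<Theta>. l \<noteq> []"
  shows "RuleC \<Theta> (Uset w0 {H. hvalid \<Theta> w0 H})"
  unfolding RuleC_def
proof (intro allI impI)
  let ?U = "Uset w0 {H. hvalid \<Theta> w0 H}"
  fix l r g assume lr: "(l,r) \<in> \<Theta>" and hb: "\<forall>i<length l. E (g i) (C (l!i)) (g (Suc i)) \<in> ?U"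
  have lne: "l \<noteq> []" using ne lr by auto
  then have "E (g 0) (C (l!0)) (g (Suc 0)) \<in> ?U" using hb by simp
  then obtain H p where H: "hvalid \<Theta> w0 H" and g0: "g 0 = nd H p" unfolding E_in_U by blast
  define w where "w = hword w0 H"
  have unpack: "p + i < length w \<and> l!i = w!(p+i) \<and> g (Suc i) = nd H (Suc (p+i))"
    if i: "i < length l" and gi: "g i = nd H (p+i)" for i
  proof -
    have "E (g i) (C (l!i)) (g (Suc i)) \<in> ?U" using hb i by blast
    then obtain H' i' where "i' < length (hword w0 H')" "g i = nd H' i'"
      "C (l!i) = C (hword w0 H' ! i')" "g (Suc i) = nd H' (Suc i')" unfolding E_in_U by blast
    then show ?thesis using gi unfolding w_def by auto
  qed
  have gi: "i \<le> length l \<Longrightarrow> g i = nd H (p+i)" for i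
  proof (induction i)
    case 0 then show ?case using g0 by simp
  next
    case (Suc i)
    then show ?case using unpack[of i] by simp
  qed
  have facts: "p + i < length w \<and> l!i = w!(p+i)" if "i < length l" for i
    using unpack[OF that gi] that by simp
  have len: "p + length l \<le> length w"
    using facts[of "length l - 1"] lne by (cases l) auto
  have tk: "take (length l) (drop p w) = l"
    by (rule nth_equalityI) (use len facts in auto)
  define G where "G = (p,l,r)#H"
  have vG: "hvalid \<Theta> w0 G" unfolding G_def using H lr len tk w_def by simp
  define q where "q j = nd G (p + j)" for j
  have "L (g 0) (q 0) \<in> ?U" unfolding L_in_U q_def g0 G_def using vG[unfolded G_def]
    by (intro exI[of _ H] exI[of _ p] exI[of _ l] exI[of _ r] exI[of _ p]) simp
  moreover have "\<forall>j<length r. E (q j) (C (r!j)) (q (Suc j)) \<in> ?U"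
  proof (intro allI impI)
    fix j assume j: "j < length r"
    have "p + j < length (hword w0 G)" using len j unfolding G_def w_def by simp
    moreover have "hword w0 G ! (p + j) = r ! j" unfolding G_def using hword_nth_mid[of p w0 H j r l] len j w_def by simp
    ultimately show "E (q j) (C (r!j)) (q (Suc j)) \<in> ?U" unfolding E_in_U q_def using vG
      by (intro exI[of _ G] exI[of _ "p + j"]) simp
  qed
  moreover have "R (g (length l)) (q (length r)) \<in> ?U"
    unfolding R_in_U q_def G_def using vG[unfolded G_def] gi[of "length l"] len w_def
    by (intro exI[of _ H] exI[of _ p] exI[of _ l] exI[of _ r] exI[of _ 0]) simp
  ultimately show "\<exists>q. L (g 0) (q 0) \<in> ?U \<and> (\<forall>j<length r. E (q j) (C (r!j)) (q (Suc j)) \<in> ?U) \<and> R (g (length l)) (q (length r)) \<in> ?U"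
    by blast
qed

lemma U_LeftC: "LeftC (Uset w0 {H. hvalid \<Theta> w0 H})"
  unfolding LeftC_def
proof (intro allI impI)
  let ?U = "Uset w0 {H. hvalid \<Theta> w0 H}"
  fix a b y c assume e: "E a (C c) b \<in> ?U" and l: "L b y \<in> ?U"
  from l obtain H k l r i where G: "hvalid \<Theta> w0 ((k,l,r)#H)" and ik: "i \<le> k" and b: "b = nd H i"
    and y: "y = nd ((k,l,r)#H) i" unfolding L_in_U by blast
  from e obtain H2 p where p: "p < length (hword w0 H2)" "a = nd H2 p" "C c = C (hword w0 H2 ! p)" "b = nd H2 (Suc p)"
    unfolding E_in_U by blast
  have HH: "H2 = H" "i = Suc p" using p(4) b by auto
  have kw: "k + length l \<le> length (hword w0 H)" using G by simp
  let ?G = "(k,l,r)#H"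
  have "L a (nd ?G p) \<in> ?U" unfolding L_in_U using G ik HH p(2)
    by (intro exI[of _ H] exI[of _ k] exI[of _ l] exI[of _ r] exI[of _ p]) simp
  moreover have "E (nd ?G p) (C c) y \<in> ?U"
  proof -
    have "p < length (hword w0 ?G)" using ik HH kw by simp
    moreover have "hword w0 ?G ! p = hword w0 H ! p" using hword_nth_pre[of k w0 H p l r] ik HH kw by simp
    ultimately show ?thesis unfolding E_in_U using G p(3) HH y
      by (intro exI[of _ ?G] exI[of _ p]) simp
  qed
  ultimately show "\<exists>z. L a z \<in> ?U \<and> E z (C c) y \<in> ?U" by blast
qed

lemma U_RightC: "RightC (Uset w0 {H. hvalid \<Theta> w0 H})"
  unfolding RightC_def
proof (intro allI impI)
  let ?U = "Uset w0 {H. hvalid \<Theta> w0 H}"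
  fix a b z c assume r: "R a z \<in> ?U" and e: "E a (C c) b \<in> ?U"
  from r obtain H k l r j where G: "hvalid \<Theta> w0 ((k,l,r)#H)" and jw: "k + length l + j \<le> length (hword w0 H)"
    and a: "a = nd H (k + length l + j)" and z: "z = nd ((k,l,r)#H) (k + length r + j)" unfolding R_in_U by blast
  from e obtain H2 p where p: "p < length (hword w0 H2)" "a = nd H2 p" "C c = C (hword w0 H2 ! p)" "b = nd H2 (Suc p)"
    unfolding E_in_U by blast
  have HH: "H2 = H" "p = k + length l + j" using p(2) a by auto
  have kw: "k + length l \<le> length (hword w0 H)" using G by simp
  let ?G = "(k,l,r)#H"
  have "E z (C c) (nd ?G (Suc (k + length r + j))) \<in> ?U"
  proof -
    have "k + length r + j < length (hword w0 ?G)" using p(1) HH kw by simp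
    moreover have "hword w0 ?G ! (k + length r + j) = hword w0 H ! (k + length l + j)"
      using hword_nth_suf[OF kw, of j r] p(1) HH by simp
    ultimately show ?thesis unfolding E_in_U using G p(3) HH z
      by (intro exI[of _ ?G] exI[of _ "k + length r + j"]) simp
  qed
  moreover have "R b (nd ?G (Suc (k + length r + j))) \<in> ?U"
    unfolding R_in_U using G p(1) HH p(4)
    by (intro exI[of _ H] exI[of _ k] exI[of _ l] exI[of _ r] exI[of _ "Suc j"]) simp
  ultimately show "\<exists>z'. E z (C c) z' \<in> ?U \<and> R b z' \<in> ?U" by blast
qed

lemma U_model:
  assumes ne: "\<forall>(l, r)\<in>\<Theta>. l \<noteq> []"
  shows "model (Sigma_R \<Theta>) (Uset w0 {H. hvalid \<Theta> w0 H})"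
  by (rule model_intro[OF ne U_RuleC[OF ne] U_LeftC U_RightC])

definition mapsto :: "(nat \<Rightarrow> inst_db) \<Rightarrow> inst_db \<Rightarrow> bool" where
  "mapsto seq A \<longleftrightarrow> (\<exists>k g. hom g A (seq k))"

lemma mapsto_mono: "mapsto seq B \<Longrightarrow> A \<subseteq> B \<Longrightarrow> mapsto seq A"
  unfolding mapsto_def using hom_mono by blast

lemma mapsto_ext:
  assumes seq: "\<forall>i. core_step S (seq i) (seq (Suc i))" and mA: "mapsto seq A" and s: "\<sigma> \<in> S"
    and body: "inst h ` set (fst \<sigma>) \<subseteq> A" and agree: "\<forall>x\<in>bvars \<sigma>. h' x = h x"
    and fresh: "\<forall>x\<in>evars \<sigma>. h' x \<notin> adom A \<and> (\<exists>n. h' x = N n)" and inj: "inj_on h' (evars \<sigma>)"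
  shows "mapsto seq (A \<union> inst h' ` set (snd \<sigma>))"
proof -
  obtain k g where "hom g A (seq k)" using mA unfolding mapsto_def by blast
  from extend_step[OF seq[rule_format, of k] this s body agree fresh inj]
  show ?thesis unfolding mapsto_def by blast
qed

lemma app_rule:
  assumes seq: "\<forall>i. core_step (Sigma_R \<Theta>) (seq i) (seq (Suc i))" and mA: "mapsto seq A"
    and lr: "(l,r) \<in> \<Theta>" and lne: "l \<noteq> []"
    and hb: "\<forall>i<length l. E (g i) (C (l!i)) (g (Suc i)) \<in> A"
    and fr: "\<forall>j\<le>length r. q j \<notin> adom A \<and> (\<exists>n. q j = N n)" and inj: "inj_on q {..length r}"
  shows "mapsto seq (A \<union> ({L (g 0) (q 0)} \<union> (\<lambda>j. E (q j) (C (r!j)) (q (Suc j))) ` {..<length r}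
          \<union> {R (g (length l)) (q (length r))}))"
proof -
  let ?n = "length l" and ?m = "length r"
  define h' where "h' x = (if x \<le> ?n then g x else q (x - Suc ?n))" for x
  have s: "rule_tgd (l,r) \<in> Sigma_R \<Theta>" using lr by (simp add: Sigma_R_def Sigma_Theta_def)
  have body: "inst g ` set (fst (rule_tgd (l,r))) \<subseteq> A" using hb by (simp add: rule_body_sub)
  have agree: "\<forall>x\<in>bvars (rule_tgd (l,r)). h' x = g x" by (simp add: bvars_rule[OF lne] h'_def)
  have fresh: "\<forall>x\<in>evars (rule_tgd (l,r)). h' x \<notin> adom A \<and> (\<exists>n. h' x = N n)"
    using fr by (auto simp: evars_rule[OF lne] h'_def)
  have inj': "inj_on h' (evars (rule_tgd (l,r)))"
  proof (rule inj_onI)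
    fix x y assume x: "x \<in> evars (rule_tgd (l,r))" and y: "y \<in> evars (rule_tgd (l,r))" and e: "h' x = h' y"
    have "x - Suc ?n \<in> {..?m}" "y - Suc ?n \<in> {..?m}" using x y by (auto simp: evars_rule[OF lne])
    moreover have "q (x - Suc ?n) = q (y - Suc ?n)" using e x y by (auto simp: evars_rule[OF lne] h'_def)
    ultimately have "x - Suc ?n = y - Suc ?n" using inj by (auto dest: inj_onD)
    then show "x = y" using x y by (auto simp: evars_rule[OF lne])
  qed
  have M: "mapsto seq (A \<union> inst h' ` set (snd (rule_tgd (l,r))))"
    by (rule mapsto_ext[OF seq mA s body agree fresh inj'])
  have "{L (g 0) (q 0)} \<union> (\<lambda>j. E (q j) (C (r!j)) (q (Suc j))) ` {..<length r}
          \<union> {R (g (length l)) (q (length r))} \<subseteq> inst h' ` set (snd (rule_tgd (l,r)))"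
  proof -
    have "inst h' ` set (snd (rule_tgd (l,r))) \<subseteq> inst h' ` set (snd (rule_tgd (l,r)))" by simp
    then have "L (h' 0) (h' (Suc ?n)) \<in> inst h' ` set (snd (rule_tgd (l,r)))"
      "\<forall>j<?m. E (h' (Suc ?n + j)) (C (r!j)) (h' (Suc (Suc ?n) + j)) \<in> inst h' ` set (snd (rule_tgd (l,r)))"
      "R (h' ?n) (h' (Suc ?n + ?m)) \<in> inst h' ` set (snd (rule_tgd (l,r)))"
      unfolding rule_head_sub by blast+
    then show ?thesis by (auto simp: h'_def)
  qed
  then have "A \<union> ({L (g 0) (q 0)} \<union> (\<lambda>j. E (q j) (C (r!j)) (q (Suc j))) ` {..<length r}
          \<union> {R (g (length l)) (q (length r))}) \<subseteq> A \<union> inst h' ` set (snd (rule_tgd (l,r)))" by blast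
  with M show ?thesis by (rule mapsto_mono)
qed

lemma app_left:
  assumes seq: "\<forall>i. core_step (Sigma_R \<Theta>) (seq i) (seq (Suc i))" and mA: "mapsto seq A"
    and e: "E a (C c) b \<in> A" and l: "L b y \<in> A" and z: "z \<notin> adom A" "z = N n"
  shows "mapsto seq (A \<union> {L a z, E z (C c) y})"
proof -
  define h where "h x = (if x = 0 then a else if x = 1 then b else y)" for x :: nat
  have s: "ltgd c \<in> Sigma_R \<Theta>" by (simp add: Sigma_R_def Sigma_LR_eq)
  have body: "inst h ` set (fst (ltgd c)) \<subseteq> A" using e l by (simp add: ltgd_def h_def)
  have agree: "\<forall>x\<in>bvars (ltgd c). (h(3:=z)) x = h x" by (simp add: bvars_ltgd)
  have fresh: "\<forall>x\<in>evars (ltgd c). (h(3:=z)) x \<notin> adom A \<and> (\<exists>n. (h(3:=z)) x = N n)"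
    using z by (simp add: evars_ltgd)
  have inj: "inj_on (h(3:=z)) (evars (ltgd c))" by (simp add: evars_ltgd)
  have M: "mapsto seq (A \<union> inst (h(3:=z)) ` set (snd (ltgd c)))"
    by (rule mapsto_ext[OF seq mA s body agree fresh inj])
  have "inst (h(3:=z)) ` set (snd (ltgd c)) = {L a z, E z (C c) y}" by (simp add: ltgd_def h_def)
  then show ?thesis using M by simp
qed

lemma app_right:
  assumes seq: "\<forall>i. core_step (Sigma_R \<Theta>) (seq i) (seq (Suc i))" and mA: "mapsto seq A"
    and r: "R a z \<in> A" and e: "E a (C c) b \<in> A" and z: "z' \<notin> adom A" "z' = N n"
  shows "mapsto seq (A \<union> {E z (C c) z', R b z'})"
proof -
  define h where "h x = (if x = 0 then a else if x = 1 then z else b)" for x :: nat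
  have s: "rtgd c \<in> Sigma_R \<Theta>" by (simp add: Sigma_R_def Sigma_LR_eq)
  have body: "inst h ` set (fst (rtgd c)) \<subseteq> A" using e r by (simp add: rtgd_def h_def)
  have agree: "\<forall>x\<in>bvars (rtgd c). (h(3:=z')) x = h x" by (simp add: bvars_rtgd)
  have fresh: "\<forall>x\<in>evars (rtgd c). (h(3:=z')) x \<notin> adom A \<and> (\<exists>n. (h(3:=z')) x = N n)"
    using z by (simp add: evars_rtgd)
  have inj: "inj_on (h(3:=z')) (evars (rtgd c))" by (simp add: evars_rtgd)
  have M: "mapsto seq (A \<union> inst (h(3:=z')) ` set (snd (rtgd c)))"
    by (rule mapsto_ext[OF seq mA s body agree fresh inj])
  have "inst (h(3:=z')) ` set (snd (rtgd c)) = {E z (C c) z', R b z'}" by (simp add: rtgd_def h_def)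
  then show ?thesis using M by simp
qed

definition Cp :: "bool list \<Rightarrow> hist \<Rightarrow> nat \<Rightarrow> bool list \<Rightarrow> bool list \<Rightarrow> nat \<Rightarrow> nat \<Rightarrow> inst_db" where
  "Cp w0 H k l r a b =
   {L (nd H i) (nd ((k,l,r)#H) i) | i. a \<le> i \<and> i \<le> k}
   \<union> {E (nd ((k,l,r)#H) i) (C (hword w0 ((k,l,r)#H) ! i)) (nd ((k,l,r)#H) (Suc i)) | i. a \<le> i \<and> i < b}
   \<union> {R (nd H (k + length l + j)) (nd ((k,l,r)#H) (k + length r + j)) | j. k + length r + j \<le> b}"

lemma adom_Un: "adom (A \<union> B) = adom A \<union> adom B"
  unfolding adom_def by auto

lemma Cp_adom:
  assumes "a \<le> k" "k \<le> b" "nd G' i \<in> adom (Cp w0 H k l r a b)"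
  shows "G' = H \<or> (G' = (k,l,r)#H \<and> a \<le> i \<and> i \<le> b)"
  using assms unfolding adom_def Cp_def by auto

lemma nd_N: "\<exists>n. nd H i = N n" by (simp add: nd_def)

lemma copy_step:
  assumes seq: "\<forall>i. core_step (Sigma_R \<Theta>) (seq i) (seq (Suc i))" and mA: "mapsto seq A"
    and vG: "hvalid \<Theta> w0 ((k,l,r)#H)" and lne: "l \<noteq> []"
    and EH: "\<forall>i<length (hword w0 H). E (nd H i) (C (hword w0 H ! i)) (nd H (Suc i)) \<in> A"
    and fresh: "\<forall>i. nd ((k,l,r)#H) i \<notin> adom A"
  shows "mapsto seq (A \<union> Uset w0 {(k,l,r)#H})"
proof -
  define w where "w = hword w0 H"
  define G where "G = (k,l,r)#H"
  define n where "n = length l"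
  define m where "m = length r"
  have lr: "(l,r) \<in> \<Theta>" and kn: "k + n \<le> length w" and tk: "take n (drop k w) = l"
    using vG unfolding w_def n_def by auto
  have lnth: "l ! i = w ! (k + i)" if "i < n" for i
  proof -
    have "l ! i = take n (drop k w) ! i" using tk by simp
    also have "\<dots> = w ! (k + i)" using that kn by simp
    finally show ?thesis .
  qed
  have wG_pre: "hword w0 G ! i = w ! i" if "i < k" for i
    using hword_nth_pre[of k w0 H i l r] that kn unfolding G_def w_def by simp
  have wG_mid: "hword w0 G ! (k + j) = r ! j" if "j < m" for j
    using hword_nth_mid[of k w0 H j r l] that kn unfolding G_def w_def m_def by simp
  have wG_suf: "hword w0 G ! (k + m + j) = w ! (k + n + j)" if "k + n + j < length w" for j
    using hword_nth_suf[of k l w0 H j r] that kn unfolding G_def w_def m_def n_def by simp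
  have lenG: "length (hword w0 G) = k + m + (length w - k - n)"
    using kn unfolding G_def w_def m_def n_def by simp
  have S1: "mapsto seq (A \<union> Cp w0 H k l r k (k + m))"
  proof -
    have hb: "\<forall>i<length l. E (nd H (k + i)) (C (l!i)) (nd H (k + Suc i)) \<in> A"
    proof (intro allI impI)
      fix i assume i: "i < length l"
      then have "k + i < length w" using kn n_def by simp
      then have "E (nd H (k+i)) (C (w ! (k+i))) (nd H (Suc (k+i))) \<in> A" using EH w_def by blast
      then show "E (nd H (k + i)) (C (l!i)) (nd H (k + Suc i)) \<in> A" using lnth[of i] i n_def by simp
    qed
    have fr: "\<forall>j\<le>length r. nd G (k + j) \<notin> adom A \<and> (\<exists>n. nd G (k + j) = N n)"
      using fresh nd_N unfolding G_def by blast
    have inj: "inj_on (\<lambda>j. nd G (k + j)) {..length r}" by (rule inj_onI) simp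
    have M: "mapsto seq (A \<union> ({L (nd H (k + 0)) (nd G (k + 0))} \<union> (\<lambda>j. E (nd G (k + j)) (C (r!j)) (nd G (k + Suc j))) ` {..<length r}
          \<union> {R (nd H (k + length l)) (nd G (k + length r))}))"
      using app_rule[OF seq mA lr lne, of "\<lambda>i. nd H (k + i)" "\<lambda>j. nd G (k + j)"] hb fr inj by simp
    have "Cp w0 H k l r k (k + m) \<subseteq> {L (nd H (k + 0)) (nd G (k + 0))} \<union> (\<lambda>j. E (nd G (k + j)) (C (r!j)) (nd G (k + Suc j))) ` {..<length r}
          \<union> {R (nd H (k + length l)) (nd G (k + length r))}"
    proof
      fix x assume "x \<in> Cp w0 H k l r k (k + m)"
      then consider "x = L (nd H k) (nd G k)"
        | i where "k \<le> i" "i < k + m" "x = E (nd G i) (C (hword w0 G ! i)) (nd G (Suc i))"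
        | "x = R (nd H (k + length l)) (nd G (k + length r))"
        unfolding Cp_def G_def m_def by auto
      then show "x \<in> {L (nd H (k + 0)) (nd G (k + 0))} \<union> (\<lambda>j. E (nd G (k + j)) (C (r!j)) (nd G (k + Suc j))) ` {..<length r}
          \<union> {R (nd H (k + length l)) (nd G (k + length r))}"
      proof cases
        case (2 i)
        then have "x = E (nd G (k + (i - k))) (C (r!(i-k))) (nd G (k + Suc (i - k)))"
          using wG_mid[of "i - k"] by simp
        moreover have "i - k < length r" using 2 m_def by simp
        ultimately show ?thesis by blast
      qed auto
    qed
    note sub = this
    show ?thesis by (rule mapsto_mono[OF M]) (use sub in blast)
  qed
  have S2: "mapsto seq (A \<union> Cp w0 H k l r (k - t) (k + m))" if "t \<le> k" for t
    using that
  proof (induction t)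
    case 0 then show ?case using S1 by simp
  next
    case (Suc t)
    define a where "a = k - t"
    define a' where "a' = k - Suc t"
    have aa: "a = Suc a'" "a' < k" "a \<le> k" using Suc.prems unfolding a_def a'_def by auto
    let ?B = "A \<union> Cp w0 H k l r a (k + m)"
    have mB: "mapsto seq ?B" using Suc by (simp add: a_def)
    have e: "E (nd H a') (C (w ! a')) (nd H a) \<in> ?B"
    proof -
      have "a' < length w" using aa kn by simp
      then show ?thesis using EH aa w_def by auto
    qed
    have l: "L (nd H a) (nd G a) \<in> ?B" unfolding Cp_def G_def using aa by blast
    have z: "nd G a' \<notin> adom ?B"
    proof
      assume "nd G a' \<in> adom ?B"
      then consider "nd G a' \<in> adom A" | "nd G a' \<in> adom (Cp w0 H k l r a (k + m))" unfolding adom_Un by blast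
      then show False
      proof cases
        case 1 then show False using fresh G_def by blast
      next
        case 2 from Cp_adom[OF aa(3) _ 2] aa show False unfolding G_def by auto
      qed
    qed
    obtain nn where nn: "nd G a' = N nn" using nd_N by blast
    have M: "mapsto seq (?B \<union> {L (nd H a') (nd G a'), E (nd G a') (C (w ! a')) (nd G a)})"
      by (rule app_left[OF seq mB e l z nn])
    have "Cp w0 H k l r a' (k + m) \<subseteq> ?B \<union> {L (nd H a') (nd G a'), E (nd G a') (C (w ! a')) (nd G a)}"
    proof
      fix x assume x: "x \<in> Cp w0 H k l r a' (k + m)"
      show "x \<in> ?B \<union> {L (nd H a') (nd G a'), E (nd G a') (C (w ! a')) (nd G a)}"
      proof (cases "x \<in> Cp w0 H k l r a (k + m)")
        case False
        have ci: "\<And>i. a' \<le> i \<Longrightarrow> i = a' \<or> a \<le> i" using aa by auto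
        from x False ci have "x = L (nd H a') (nd G a') \<or> x = E (nd G a') (C (hword w0 G ! a')) (nd G (Suc a'))"
          unfolding Cp_def G_def by (auto simp del: hword.simps)
        then show ?thesis using wG_pre[OF aa(2)] aa by auto
      qed simp
    qed
    note sub = this
    have "A \<union> Cp w0 H k l r a' (k + m) \<subseteq> ?B \<union> {L (nd H a') (nd G a'), E (nd G a') (C (w ! a')) (nd G a)}"
      using sub by blast
    then have "mapsto seq (A \<union> Cp w0 H k l r a' (k + m))" by (rule mapsto_mono[OF M])
    then show ?case by (simp add: a'_def)
  qed
  have S3: "mapsto seq (A \<union> Cp w0 H k l r 0 (k + m + t))" if "t \<le> length w - k - n" for t
    using that
  proof (induction t)
    case 0 then show ?case using S2[of k] by simp
  next
    case (Suc t)
    define b where "b = k + m + t"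
    let ?B = "A \<union> Cp w0 H k l r 0 b"
    have mB: "mapsto seq ?B" using Suc by (simp add: b_def)
    have tw: "k + n + t < length w" using Suc.prems by simp
    have r: "R (nd H (k + n + t)) (nd G b) \<in> ?B" unfolding Cp_def G_def b_def n_def m_def by blast
    have e: "E (nd H (k + n + t)) (C (w ! (k + n + t))) (nd H (Suc (k + n + t))) \<in> ?B"
      using EH tw w_def by auto
    have z: "nd G (Suc b) \<notin> adom ?B"
    proof
      assume "nd G (Suc b) \<in> adom ?B"
      then consider "nd G (Suc b) \<in> adom A" | "nd G (Suc b) \<in> adom (Cp w0 H k l r 0 b)" unfolding adom_Un by blast
      then show False
      proof cases
        case 1 then show False using fresh G_def by blast
      next
        case 2 from Cp_adom[OF _ _ 2] show False unfolding G_def b_def by auto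
      qed
    qed
    obtain nn where nn: "nd G (Suc b) = N nn" using nd_N by blast
    have M: "mapsto seq (?B \<union> {E (nd G b) (C (w ! (k + n + t))) (nd G (Suc b)), R (nd H (Suc (k + n + t))) (nd G (Suc b))})"
      using app_right[OF seq mB r e z nn] by simp
    have "Cp w0 H k l r 0 (Suc b) \<subseteq> ?B \<union> {E (nd G b) (C (w ! (k + n + t))) (nd G (Suc b)), R (nd H (Suc (k + n + t))) (nd G (Suc b))}"
    proof
      fix x assume x: "x \<in> Cp w0 H k l r 0 (Suc b)"
      show "x \<in> ?B \<union> {E (nd G b) (C (w ! (k + n + t))) (nd G (Suc b)), R (nd H (Suc (k + n + t))) (nd G (Suc b))}"
      proof (cases "x \<in> Cp w0 H k l r 0 b")
        case False
        have ci: "\<And>i. i < Suc b \<Longrightarrow> i < b \<or> i = b" by auto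
        have cj: "\<And>j. k + length r + j \<le> Suc b \<Longrightarrow> k + length r + j \<le> b \<or> j = Suc t" unfolding b_def m_def by auto
        from x False ci cj have "x = E (nd G b) (C (hword w0 G ! b)) (nd G (Suc b)) \<or>
            x = R (nd H (k + n + Suc t)) (nd G (k + m + Suc t))"
          unfolding Cp_def G_def n_def by (auto simp del: hword.simps simp: b_def m_def)
        then show ?thesis using wG_suf[OF tw] unfolding b_def by auto
      qed simp
    qed
    note sub = this
    have "A \<union> Cp w0 H k l r 0 (Suc b) \<subseteq> ?B \<union> {E (nd G b) (C (w ! (k + n + t))) (nd G (Suc b)), R (nd H (Suc (k + n + t))) (nd G (Suc b))}"
      using sub by blast
    then have "mapsto seq (A \<union> Cp w0 H k l r 0 (Suc b))" by (rule mapsto_mono[OF M])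
    then show ?case by (simp add: b_def)
  qed
  have "Uset w0 {G} \<subseteq> Cp w0 H k l r 0 (k + m + (length w - k - n))"
    unfolding Uset_def Cp_def G_def using lenG kn unfolding G_def w_def m_def n_def by auto
  note sub = this
  have "A \<union> Uset w0 {(k,l,r)#H} \<subseteq> A \<union> Cp w0 H k l r 0 (k + m + (length w - k - n))"
    using sub unfolding G_def by blast
  then show ?thesis by (rule mapsto_mono[OF S3[OF order_refl]])
qed

lemma Uset_Un: "Uset w0 (A \<union> B) = Uset w0 A \<union> Uset w0 B"
proof (rule set_eqI)
  fix x show "x \<in> Uset w0 (A \<union> B) \<longleftrightarrow> x \<in> Uset w0 A \<union> Uset w0 B"
    by (cases x; simp only: Un_iff E_in_U L_in_U R_in_U; blast)
qed

lemma nd_adom_U: "nd G i \<in> adom (Uset w0 F) \<Longrightarrow> G \<in> F \<or> (\<exists>s. s#G \<in> F)"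
  unfolding adom_def Uset_def by auto

lemma U_base:
  assumes s0: "seq 0 = word_instance w0"
  shows "mapsto seq (Uset w0 {[]})"
proof -
  define \<psi> where "\<psi> z = (case z of N n \<Rightarrow> N (snd (from_nat n :: hist \<times> nat)) | C c \<Rightarrow> C c)" for z
  have \<psi>nd: "\<psi> (nd H i) = N i" for H i by (simp add: \<psi>_def nd_def)
  have "hom \<psi> (Uset w0 {[]}) (seq 0)"
    unfolding hom_def
  proof (intro conjI allI subsetI)
    fix c show "\<psi> (C c) = C c" by (simp add: \<psi>_def)
  next
    fix x assume "x \<in> map_atom \<psi> ` Uset w0 {[]}"
    then obtain y where y: "y \<in> Uset w0 {[]}" "x = map_atom \<psi> y" by blast
    from y(1) obtain i where "i < length w0" "y = E (nd [] i) (C (w0 ! i)) (nd [] (Suc i))"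
      unfolding Uset_def by auto
    then show "x \<in> seq 0" using y(2) \<psi>nd unfolding s0 word_instance_def by (auto simp: \<psi>_def)
  qed
  then show ?thesis unfolding mapsto_def by blast
qed

lemma U_layer:
  assumes seq: "\<forall>i. core_step (Sigma_R \<Theta>) (seq i) (seq (Suc i))" and s0: "seq 0 = word_instance w0"
    and fin: "finite {H. hvalid \<Theta> w0 H}" and ne: "\<forall>(l, r)\<in>\<Theta>. l \<noteq> []"
  shows "mapsto seq (Uset w0 {H. hvalid \<Theta> w0 H \<and> length H \<le> d})"
proof (induction d)
  case 0
  have "{H. hvalid \<Theta> w0 H \<and> length H \<le> 0} = {[]}" by auto
  then show ?case using U_base[of seq w0, OF s0] by simp
next
  case (Suc d)
  define Fd where "Fd = {H. hvalid \<Theta> w0 H \<and> length H \<le> d}"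
  define Ly where "Ly = {H. hvalid \<Theta> w0 H \<and> length H = Suc d}"
  have "finite X \<Longrightarrow> X \<subseteq> Ly \<Longrightarrow> mapsto seq (Uset w0 (Fd \<union> X))" for X
  proof (induction X rule: finite_induct)
    case empty
    then show ?case using Suc.IH unfolding Fd_def by simp
  next
    case (insert G X)
    then have GL: "G \<in> Ly" and XL: "X \<subseteq> Ly" by auto
    then have mA: "mapsto seq (Uset w0 (Fd \<union> X))" using insert by blast
    from GL obtain k l r H where G: "G = (k,l,r)#H" unfolding Ly_def by (cases G) auto
    have vG: "hvalid \<Theta> w0 ((k,l,r)#H)" using GL G unfolding Ly_def by simp
    then have lne: "l \<noteq> []" using ne by auto
    have HF: "H \<in> Fd" using GL G vG unfolding Ly_def Fd_def by simp
    have EH: "\<forall>i<length (hword w0 H). E (nd H i) (C (hword w0 H ! i)) (nd H (Suc i)) \<in> Uset w0 (Fd \<union> X)"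
      using HF unfolding E_in_U by blast
    have fresh: "\<forall>i. nd ((k,l,r)#H) i \<notin> adom (Uset w0 (Fd \<union> X))"
    proof (intro allI notI)
      fix i assume "nd ((k,l,r)#H) i \<in> adom (Uset w0 (Fd \<union> X))"
      from nd_adom_U[OF this] show False
      proof
        assume "(k,l,r)#H \<in> Fd \<union> X"
        then show False using insert(2) G GL unfolding Fd_def Ly_def by auto
      next
        assume "\<exists>s. s # (k,l,r)#H \<in> Fd \<union> X"
        then obtain s where "s # G \<in> Fd \<union> X" using G by blast
        then show False using XL GL unfolding Fd_def Ly_def by auto
      qed
    qed
    have "mapsto seq (Uset w0 (Fd \<union> X) \<union> Uset w0 {(k,l,r)#H})"
      by (rule copy_step[OF seq mA vG lne EH fresh])
    moreover have "Uset w0 (Fd \<union> insert G X) = Uset w0 (Fd \<union> X) \<union> Uset w0 {(k,l,r)#H}"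
    proof -
      have eq: "Fd \<union> insert G X = (Fd \<union> X) \<union> {(k,l,r)#H}" using G by blast
      show ?thesis unfolding eq by (rule Uset_Un)
    qed
    ultimately show ?case by simp
  qed
  moreover have "finite Ly" using fin unfolding Ly_def by (rule finite_subset[rotated]) auto
  ultimately have "mapsto seq (Uset w0 (Fd \<union> Ly))" by blast
  moreover have "Fd \<union> Ly = {H. hvalid \<Theta> w0 H \<and> length H \<le> Suc d}" unfolding Fd_def Ly_def by auto
  ultimately show ?case by simp
qed

lemma chase_imp_deriv:
  assumes fT: "finite \<Theta>" and ne: "\<forall>(l, r)\<in>\<Theta>. l \<noteq> []"
    and ch: "core_chase_infinite (Sigma_R \<Theta>) (word_instance w0)"
  shows "\<exists>ws. ws 0 = w0 \<and> (\<forall>i. rewrite \<Theta> (ws i) (ws (Suc i)))"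
proof (rule ccontr)
  assume noinf: "\<not> ?thesis"
  let ?S = "Sigma_R \<Theta>"
  obtain seq where s0: "seq 0 = word_instance w0" and seq: "\<forall>i. core_step ?S (seq i) (seq (Suc i))"
    using ch unfolding core_chase_infinite_def by blast
  have fin: "finite {H. hvalid \<Theta> w0 H}" by (rule finite_hvalid[OF fT noinf])
  define U where "U = Uset w0 {H. hvalid \<Theta> w0 H}"
  have mU: "model ?S U" unfolding U_def by (rule U_model[OF ne])
  define D where "D = Max (length ` {H. hvalid \<Theta> w0 H})"
  have "{H. hvalid \<Theta> w0 H \<and> length H \<le> D} = {H. hvalid \<Theta> w0 H}"
    using fin unfolding D_def by auto
  then have "mapsto seq U" using U_layer[OF seq s0 fin ne, of D] unfolding U_def by simp
  then obtain k u where hu: "hom u U (seq k)" unfolding mapsto_def by blast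
  obtain K where cK: "is_core_of K (seq (Suc k))" and kK: "seq k \<subseteq> K"
    using core_step_K[OF seq[rule_format, of k]] by blast
  obtain hc where hc: "hom hc K (seq (Suc k))" using cK unfolding is_core_of_def by blast
  have hu': "hom (hc \<circ> u) U (seq (Suc k))" by (rule hom_comp[OF hu kK hc])
  have toU: "\<exists>e. hom e (seq i) U" for i
  proof (induction i)
    case 0
    define \<phi> where "\<phi> z = (case z of N i \<Rightarrow> nd [] i | C c \<Rightarrow> C c)" for z
    have "hom \<phi> (seq 0) U"
      unfolding hom_def
    proof (intro conjI allI subsetI)
      fix c show "\<phi> (C c) = C c" by (simp add: \<phi>_def)
    next
      fix x assume "x \<in> map_atom \<phi> ` seq 0"
      then obtain i where "i < length w0" "x = map_atom \<phi> (E (N i) (C (w0 ! i)) (N (Suc i)))"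
        unfolding s0 word_instance_def by blast
      then have i: "i < length (hword w0 [])" and xe: "x = E (nd [] i) (C (hword w0 [] ! i)) (nd [] (Suc i))"
        by (simp_all add: \<phi>_def)
      have "E (nd [] i) (C (hword w0 [] ! i)) (nd [] (Suc i)) \<in> Uset w0 {H. hvalid \<Theta> w0 H}"
        unfolding E_in_U using i by (intro exI[of _ "[]"] exI[of _ i]) simp
      then show "x \<in> U" unfolding U_def xe .
    qed
    then show ?case by blast
  next
    case (Suc i)
    then obtain e where "hom e (seq i) U" by blast
    from chase_to_model[OF mU seq[rule_format, of i] this] show ?case .
  qed
  have finS: "finite (seq i)" for i
  proof (induction i)
    case 0 then show ?case using word_instance_Inv[of w0] s0 unfolding Inv_def by simp
  next
    case (Suc i) then show ?case using finite_core_step[OF finite_Sigma_R[OF fT] _ seq[rule_format, of i]] by blast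
  qed
  obtain e where he: "hom e (seq (Suc k)) U" using toU by blast
  have "model ?S (seq (Suc k))" by (rule core_equiv_model[OF cK finS mU he hu'])
  then show False using model_no_step seq by blast
qed

theorem theorem8:
  fixes \<Theta> :: "(bool list \<times> bool list) set" and w0 :: "bool list"
  assumes "finite \<Theta>"
    and "\<forall>(l, r)\<in>\<Theta>. l \<noteq> []"
  shows "core_chase_infinite (Sigma_R \<Theta>) (word_instance w0) \<longleftrightarrow>
         (\<exists>ws. ws 0 = w0 \<and> (\<forall>i. rewrite \<Theta> (ws i) (ws (Suc i))))"
  using chase_imp_deriv[OF assms] deriv_imp_chase[OF assms] by blast

end
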